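(* Let $\Gamma$ be a finite connected tetravalent $G$-half-arc-transitive graph with $G\leq\mathrm{Aut}(\Gamma)$, and let $N$ be a solvable normal subgroup of $G$. If $G$ is non-solvable, then $\Gamma$ is a normal cover of $\Gamma_N$ and $N$ is semiregular on $V(\Gamma)$.
   Context: $\Gamma$ is $G$-half-arc-transitive if $G$ is transitive on vertices and edges but not on arcs. For $N\trianglelefteq G$, the normal quotient $\Gamma_N$ has as vertices the $N$-orbits on $V(\Gamma)$, two distinct orbits adjacent iff some edge of $\Gamma$ joins them. $\Gamma$ is a normal cover of $\Gamma_N$ if $\Gamma_N$ has the same valency as $\Gamma$. A permutation group is semiregular if all point stabilizers are trivial. *)

theory Defs
  imports "HOL-Algebra.Solvable_Groups" "HOL-Algebra.Bij"
begin

definition simple_graph :: "'a set \<Rightarrow> ('a \<Rightarrow> 'a \<Rightarrow> bool) \<Rightarrow> bool" where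
  "simple_graph V E \<longleftrightarrow> finite V \<and> (\<forall>u v. E u v \<longrightarrow> u \<in> V \<and> v \<in> V \<and> E v u \<and> u \<noteq> v)"

definition graph_connected :: "'a set \<Rightarrow> ('a \<Rightarrow> 'a \<Rightarrow> bool) \<Rightarrow> bool" where
  "graph_connected V E \<longleftrightarrow> V \<noteq> {} \<and> (\<forall>u\<in>V. \<forall>v\<in>V. E\<^sup>*\<^sup>* u v)"

definition tetravalent :: "'a set \<Rightarrow> ('a \<Rightarrow> 'a \<Rightarrow> bool) \<Rightarrow> bool" where
  "tetravalent V E \<longleftrightarrow> (\<forall>v\<in>V. card {w \<in> V. E v w} = 4)"

definition graph_edges :: "('a \<Rightarrow> 'a \<Rightarrow> bool) \<Rightarrow> 'a set set" where
  "graph_edges E = {{u, v} | u v. E u v}"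

definition graph_arcs :: "('a \<Rightarrow> 'a \<Rightarrow> bool) \<Rightarrow> ('a \<times> 'a) set" where
  "graph_arcs E = {(u, v). E u v}"

definition graph_aut :: "'a set \<Rightarrow> ('a \<Rightarrow> 'a \<Rightarrow> bool) \<Rightarrow> ('a \<Rightarrow> 'a) set" where
  "graph_aut V E = {g \<in> Bij V. \<forall>u\<in>V. \<forall>v\<in>V. E (g u) (g v) \<longleftrightarrow> E u v}"

abbreviation perm_grp :: "'a set \<Rightarrow> ('a \<Rightarrow> 'a) set \<Rightarrow> ('a \<Rightarrow> 'a) monoid" where
  "perm_grp V H \<equiv> (BijGroup V)\<lparr>carrier := H\<rparr>"

definition half_arc_transitive ::
  "'a set \<Rightarrow> ('a \<Rightarrow> 'a \<Rightarrow> bool) \<Rightarrow> ('a \<Rightarrow> 'a) set \<Rightarrow> bool" where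
  "half_arc_transitive V E G \<longleftrightarrow>
     (\<forall>u\<in>V. \<forall>v\<in>V. \<exists>g\<in>G. g u = v) \<and>
     (\<forall>e\<in>graph_edges E. \<forall>f\<in>graph_edges E. \<exists>g\<in>G. g ` e = f) \<and>
     \<not> (\<forall>a\<in>graph_arcs E. \<forall>b\<in>graph_arcs E. \<exists>g\<in>G. (g (fst a), g (snd a)) = b)"

definition orbit_of :: "('a \<Rightarrow> 'a) set \<Rightarrow> 'a \<Rightarrow> 'a set" where
  "orbit_of N v = {n v | n. n \<in> N}"

definition quotient_vertices :: "'a set \<Rightarrow> ('a \<Rightarrow> 'a) set \<Rightarrow> 'a set set" where
  "quotient_vertices V N = orbit_of N ` V"

definition quotient_adj :: "('a \<Rightarrow> 'a \<Rightarrow> bool) \<Rightarrow> 'a set \<Rightarrow> 'a set \<Rightarrow> bool" where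
  "quotient_adj E B C \<longleftrightarrow> B \<noteq> C \<and> (\<exists>u\<in>B. \<exists>w\<in>C. E u w)"

text \<open>Gamma is a normal cover of Gamma_N: Gamma_N has the same valency (4) as Gamma.\<close>
definition normal_cover_tetra :: "'a set \<Rightarrow> ('a \<Rightarrow> 'a \<Rightarrow> bool) \<Rightarrow> ('a \<Rightarrow> 'a) set \<Rightarrow> bool" where
  "normal_cover_tetra V E N \<longleftrightarrow>
     (\<forall>B\<in>quotient_vertices V N. card {C \<in> quotient_vertices V N. quotient_adj E B C} = 4)"

definition semiregular :: "'a set \<Rightarrow> ('a \<Rightarrow> 'a) set \<Rightarrow> bool" where
  "semiregular V N \<longleftrightarrow> (\<forall>v\<in>V. \<forall>n\<in>N. n v = v \<longrightarrow> n = (\<lambda>x\<in>V. x))"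

end

theory Submission
  imports Defs
begin



lemma (in group) derived_sub_by_comm:
  assumes "subgroup H G" "K \<subseteq> carrier G"
    "\<And>a b. a \<in> K \<Longrightarrow> b \<in> K \<Longrightarrow> a \<otimes> b \<otimes> inv a \<otimes> inv b \<in> H"
  shows "derived G K \<subseteq> H"
  unfolding derived_def using assms by (intro generate_subgroup_incl) auto

lemma (in group) stab_subgroup:
  assumes mult: "\<And>a b y. a \<in> carrier G \<Longrightarrow> b \<in> carrier G \<Longrightarrow> y \<in> Y \<Longrightarrow> act (a \<otimes> b) y = act a (act b y)"
    and one: "\<And>y. y \<in> Y \<Longrightarrow> act \<one> y = y"
  shows "subgroup {g \<in> carrier G. \<forall>y\<in>Y. act g y = y} G"
proof (rule subgroupI)
  show "{g \<in> carrier G. \<forall>y\<in>Y. act g y = y} \<subseteq> carrier G" by auto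
  show "{g \<in> carrier G. \<forall>y\<in>Y. act g y = y} \<noteq> {}" using one by auto
next
  fix a assume a: "a \<in> {g \<in> carrier G. \<forall>y\<in>Y. act g y = y}"
  have "act (inv a) y = y" if "y \<in> Y" for y
  proof -
    have "act (inv a) y = act (inv a) (act a y)" using a that by auto
    also have "\<dots> = act (inv a \<otimes> a) y" using mult[of "inv a" a y] a that by auto
    also have "\<dots> = y" using a that one by auto
    finally show ?thesis .
  qed
  then show "inv a \<in> {g \<in> carrier G. \<forall>y\<in>Y. act g y = y}" using a by auto
next
  fix a b assume "a \<in> {g \<in> carrier G. \<forall>y\<in>Y. act g y = y}" "b \<in> {g \<in> carrier G. \<forall>y\<in>Y. act g y = y}"
  then show "a \<otimes> b \<in> {g \<in> carrier G. \<forall>y\<in>Y. act g y = y}" using mult by auto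
qed

lemma (in group) comm_fix:
  assumes g: "g \<in> carrier G" and h: "h \<in> carrier G"
    and mult: "\<And>a b y. a \<in> carrier G \<Longrightarrow> b \<in> carrier G \<Longrightarrow> y \<in> Y \<Longrightarrow> act (a \<otimes> b) y = act a (act b y)"
    and one: "\<And>y. y \<in> Y \<Longrightarrow> act \<one> y = y"
    and clg: "\<And>y. y \<in> Y \<Longrightarrow> act (inv g) y \<in> Y"
    and clh: "\<And>y. y \<in> Y \<Longrightarrow> act (inv h) y \<in> Y"
    and comm: "\<And>y. y \<in> Y \<Longrightarrow> act g (act h y) = act h (act g y)"
    and y: "y \<in> Y"
  shows "act (g \<otimes> h \<otimes> inv g \<otimes> inv h) y = y"
proof -
  define w where "w = act (inv h) y"
  define z where "z = act (inv g) w"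
  have w: "w \<in> Y" using clh y w_def by auto
  have z: "z \<in> Y" using clg w z_def by auto
  have "act (g \<otimes> h \<otimes> inv g \<otimes> inv h) y = act (g \<otimes> h \<otimes> inv g) w"
    using mult[of "g \<otimes> h \<otimes> inv g" "inv h" y] g h y w_def by auto
  also have "\<dots> = act (g \<otimes> h) z"
    using mult[of "g \<otimes> h" "inv g" w] g h w z_def by auto
  also have "\<dots> = act g (act h z)" using mult g h z by auto
  also have "\<dots> = act h (act g z)" using comm z by auto
  also have "act g z = act (g \<otimes> inv g) w" using mult[of g "inv g" w] g w z_def by auto
  also have "\<dots> = w" using g one w by auto
  also have "act h w = act (h \<otimes> inv h) y" using mult[of h "inv h" y] h y w_def by auto
  also have "\<dots> = y" using h one y by auto
  finally show ?thesis .
qed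

lemma three_in:
  assumes "finite Y" "card Y \<le> 2" "a \<in> Y" "b \<in> Y" "c \<in> Y" "a \<noteq> b"
  shows "c = a \<or> c = b"
proof (rule ccontr)
  assume "\<not> (c = a \<or> c = b)"
  then have "card {a, b, c} = 3" using assms by auto
  moreover have "card {a,b,c} \<le> card Y" using assms by (intro card_mono) auto
  ultimately show False using assms by auto
qed

lemma two_commute:
  assumes fin: "finite Y" and c2: "card Y \<le> 2" and f: "f ` Y \<subseteq> Y" "inj_on f Y"
    and k: "k ` Y \<subseteq> Y" "inj_on k Y" and y: "y \<in> Y"
  shows "f (k y) = k (f y)"
proof -
  have fy: "f y \<in> Y" "k y \<in> Y" "f (k y) \<in> Y" "k (f y) \<in> Y" "f (f y) \<in> Y" "k (k y) \<in> Y"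
    using f k y by (auto simp: image_subset_iff)
  note T = three_in[OF fin c2]
  show ?thesis
  proof (cases "f y = y")
    case True
    show ?thesis
    proof (cases "k y = y")
      case True then show ?thesis using \<open>f y = y\<close> by simp
    next
      case False
      have "f (k y) \<noteq> y" using True False f(2) y fy by (metis inj_on_def)
      then have "f (k y) = k y" using T[of y "k y" "f (k y)"] False y fy by auto
      then show ?thesis using True by simp
    qed
  next
    case False
    show ?thesis
    proof (cases "k y = y")
      case True
      have "k (f y) \<noteq> y" using True False k(2) y fy by (metis inj_on_def)
      then have "k (f y) = f y" using T[of y "f y" "k (f y)"] False y fy by auto
      then show ?thesis using True by simp
    next
      case kF: False
      have kf: "k y = f y" using T[of y "f y" "k y"] False kF y fy by auto
      have "f (f y) \<noteq> f y" using False f(2) y fy by (metis inj_on_def)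
      then have ff: "f (f y) = y" using T[of y "f y" "f (f y)"] False y fy by auto
      have "k (k y) \<noteq> k y" using kF k(2) y fy by (metis inj_on_def)
      then have kk: "k (k y) = y" using T[of y "k y" "k (k y)"] kF y fy by auto
      show ?thesis using kf ff kk by simp
    qed
  qed
qed




locale cyc =
  fixes Om :: "'b set" and A :: "'b \<Rightarrow> 'b \<Rightarrow> bool"
  assumes fin: "finite Om"
    and A_in: "A P Q \<Longrightarrow> P \<in> Om \<and> Q \<in> Om"
    and A_sym: "A P Q \<Longrightarrow> A Q P"
    and A_irr: "A P Q \<Longrightarrow> P \<noteq> Q"
    and val: "P \<in> Om \<Longrightarrow> card {Q. A P Q} \<le> 2"
    and conn: "P \<in> Om \<Longrightarrow> Q \<in> Om \<Longrightarrow> A\<^sup>*\<^sup>* P Q"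
begin

definition "T = {(P,Q). A P Q}"
definition nxt :: "'b \<Rightarrow> 'b \<Rightarrow> 'b" where
  "nxt P Q = (if \<exists>R. A Q R \<and> R \<noteq> P then (SOME R. A Q R \<and> R \<noteq> P) else P)"
definition rho :: "'b \<times> 'b \<Rightarrow> 'b \<times> 'b" where "rho t = (snd t, nxt (fst t) (snd t))"
definition orb where "orb t = range (\<lambda>i. (rho ^^ i) t)"
definition rv :: "'b \<times> 'b \<Rightarrow> 'b \<times> 'b" where "rv t = (snd t, fst t)"

lemma T_sub: "T \<subseteq> Om \<times> Om" using A_in by (auto simp: T_def)
lemma fin_T: "finite T" using T_sub fin by (meson finite_SigmaI finite_subset)

lemma nbr_unique:
  assumes "A Q P" "A Q R1" "A Q R2" "R1 \<noteq> P" "R2 \<noteq> P" shows "R1 = R2"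
proof -
  have Q: "Q \<in> Om" using assms A_in by auto
  have "finite {R. A Q R}" using fin A_in by (metis (mono_tags, lifting) mem_Collect_eq rev_finite_subset subsetI)
  then show ?thesis using three_in[of "{R. A Q R}" P R1 R2] val[OF Q] three_in[of "{R. A Q R}" R1 P R2] assms
    by auto
qed

lemma nxt_eq: assumes "A P Q" "A Q R" "R \<noteq> P" shows "nxt P Q = R"
proof -
  have ex: "\<exists>R. A Q R \<and> R \<noteq> P" using assms by auto
  then have s: "A Q (SOME R. A Q R \<and> R \<noteq> P) \<and> (SOME R. A Q R \<and> R \<noteq> P) \<noteq> P" by (rule someI_ex)
  show ?thesis unfolding nxt_def using ex s nbr_unique[of Q P R "SOME R. A Q R \<and> R \<noteq> P"] assms A_sym
    by auto
qed

lemma nxt_none: assumes "\<not> (\<exists>R. A Q R \<and> R \<noteq> P)" shows "nxt P Q = P"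
  using assms unfolding nxt_def by auto

lemma nxt_A: assumes "A P Q" shows "A Q (nxt P Q)"
proof (cases "\<exists>R. A Q R \<and> R \<noteq> P")
  case True
  then obtain R where "A Q R" "R \<noteq> P" by auto
  then show ?thesis using nxt_eq assms by auto
next
  case False then show ?thesis using nxt_none assms A_sym by auto
qed

lemma rho_T: "t \<in> T \<Longrightarrow> rho t \<in> T"
  by (cases t) (auto simp: T_def rho_def nxt_A)

lemma rho_inj: "inj_on rho T"
proof (rule inj_onI)
  fix s t assume s: "s \<in> T" and t: "t \<in> T" and e: "rho s = rho t"
  obtain P Q where sPQ: "s = (P,Q)" by (cases s)
  obtain P' Q' where tPQ: "t = (P',Q')" by (cases t)
  have A1: "A P Q" "A P' Q'" using s t sPQ tPQ by (auto simp: T_def)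
  have QQ: "Q' = Q" and nn: "nxt P Q = nxt P' Q" using e sPQ tPQ by (auto simp: rho_def)
  have "P = P'"
  proof (rule ccontr)
    assume ne: "P \<noteq> P'"
    have AQ: "A Q P" "A Q P'" using A1 QQ A_sym by auto
    have "nxt P Q = P'"
      using nxt_eq[of P Q P'] A1 AQ ne by auto
    moreover have "nxt P' Q = P" using nxt_eq[of P' Q P] A1 AQ ne QQ by auto
    ultimately show False using nn ne by auto
  qed
  then show "s = t" using sPQ tPQ QQ by auto
qed

lemma rho_img: "rho ` T = T"
  by (rule endo_inj_surj[OF fin_T _ rho_inj]) (use rho_T in blast)

lemma funpow_T: "t \<in> T \<Longrightarrow> (rho ^^ i) t \<in> T"
  by (induct i) (auto simp: rho_T)

lemma funpow_cancel: "x \<in> T \<Longrightarrow> y \<in> T \<Longrightarrow> (rho ^^ i) x = (rho ^^ i) y \<Longrightarrow> x = y"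
proof (induct i)
  case 0 then show ?case by simp
next
  case (Suc i)
  have "rho ((rho ^^ i) x) = rho ((rho ^^ i) y)" using Suc by simp
  then have "(rho ^^ i) x = (rho ^^ i) y" using rho_inj funpow_T Suc.prems by (meson inj_onD)
  then show ?case using Suc by simp
qed

lemma periodic: assumes s: "s \<in> T" shows "\<exists>m>0. (rho ^^ m) s = s"
proof -
  have "\<not> inj_on (\<lambda>i. (rho ^^ i) s) {0..card T}"
  proof
    assume inj: "inj_on (\<lambda>i. (rho ^^ i) s) {0..card T}"
    have "(\<lambda>i. (rho ^^ i) s) ` {0..card T} \<subseteq> T" using funpow_T s by blast
    then have "card ((\<lambda>i. (rho ^^ i) s) ` {0..card T}) \<le> card T" using fin_T card_mono by blast
    then show False using card_image[OF inj] by simp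
  qed
  then obtain i j where ij: "i \<in> {0..card T}" "j \<in> {0..card T}" "i \<noteq> j" "(rho ^^ i) s = (rho ^^ j) s"
    unfolding inj_on_def by blast
  then have "\<exists>i j. i < j \<and> (rho ^^ i) s = (rho ^^ j) s"
    by (metis linorder_neqE_nat)
  then obtain i j where ij: "i < j" "(rho ^^ i) s = (rho ^^ j) s" by auto
  have jj: "j = i + (j - i)" using ij(1) by simp
  have "(rho ^^ j) s = (rho ^^ i) ((rho ^^ (j - i)) s)"
    by (subst jj) (simp add: funpow_add)
  then have "s = (rho ^^ (j - i)) s"
    using funpow_cancel[of s "(rho ^^ (j - i)) s" i] ij s funpow_T by auto
  then show ?thesis using ij(1) by (intro exI[of _ "j - i"]) auto
qed

lemma orb_self: "t \<in> orb t" unfolding orb_def by (auto intro: range_eqI[of _ _ 0])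

lemma orb_rho: assumes "x \<in> orb t" shows "rho x \<in> orb t"
proof -
  obtain i where "x = (rho ^^ i) t" using assms unfolding orb_def by auto
  then have "rho x = (rho ^^ (Suc i)) t" by simp
  then show ?thesis unfolding orb_def by blast
qed

lemma orb_sub: "t \<in> T \<Longrightarrow> orb t \<subseteq> T" unfolding orb_def using funpow_T by blast

lemma orb_pre: assumes t: "t \<in> T" and s: "s \<in> T" and r: "rho s \<in> orb t" shows "s \<in> orb t"
proof -
  obtain m where m: "m > 0" "(rho ^^ m) s = s" using periodic[OF s] by auto
  obtain k where k: "rho s = (rho ^^ k) t" using r unfolding orb_def by auto
  have "s = (rho ^^ (m - 1)) (rho s)" using m
    by (metis Suc_diff_1 comp_apply funpow_Suc_right)
  also have "\<dots> = (rho ^^ (m - 1 + k)) t" using k by (simp add: funpow_add)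
  finally show ?thesis unfolding orb_def by auto
qed

lemma orb_mono: assumes "x \<in> orb t" shows "orb x \<subseteq> orb t"
proof
  fix y assume "y \<in> orb x"
  then obtain j where j: "y = (rho ^^ j) x" unfolding orb_def by auto
  obtain i where i: "x = (rho ^^ i) t" using assms unfolding orb_def by auto
  have "y = (rho ^^ (j + i)) t" using i j by (simp add: funpow_add)
  then show "y \<in> orb t" unfolding orb_def by blast
qed

lemma orb_back: assumes "s \<in> T" shows "x \<in> T \<Longrightarrow> (rho ^^ k) x \<in> orb s \<Longrightarrow> x \<in> orb s"
proof (induct k arbitrary: x)
  case 0 then show ?case by simp
next
  case (Suc k)
  have "(rho ^^ k) (rho x) \<in> orb s" using Suc.prems by (simp add: funpow_Suc_right del: funpow.simps)
  then have "rho x \<in> orb s" using Suc rho_T by auto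
  then show ?case using orb_pre assms Suc.prems by auto
qed

lemma orb_same: assumes t: "t \<in> T" and x: "x \<in> orb t" shows "orb x = orb t"
proof
  show "orb x \<subseteq> orb t" using orb_mono x .
  have xT: "x \<in> T" using orb_sub t x by blast
  obtain k where "x = (rho ^^ k) t" using x unfolding orb_def by auto
  then have "(rho ^^ k) t \<in> orb x" using orb_self by simp
  then have "t \<in> orb x" using orb_back[OF xT t, of k] by simp
  then show "orb t \<subseteq> orb x" using orb_mono by auto
qed

lemma rv_T: "t \<in> T \<Longrightarrow> rv t \<in> T" by (cases t) (auto simp: T_def rv_def A_sym)
lemma rv_rv[simp]: "rv (rv t) = t" by (cases t) (auto simp: rv_def)

lemma rho_rv_rho: assumes t: "t \<in> T" shows "rho (rv (rho t)) = rv t"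
proof -
  obtain P Q where tPQ: "t = (P,Q)" by (cases t)
  have A1: "A P Q" using t tPQ by (auto simp: T_def)
  show ?thesis
  proof (cases "nxt P Q = P")
    case True then show ?thesis using tPQ by (simp add: rho_def rv_def)
  next
    case False
    have "nxt (nxt P Q) Q = P"
      using nxt_eq[of "nxt P Q" Q P] nxt_A[OF A1] A_sym A1 False by auto
    then show ?thesis using tPQ by (simp add: rho_def rv_def)
  qed
qed

lemma rv_orb: assumes t: "t \<in> T" shows "s \<in> orb t \<Longrightarrow> rv s \<in> orb (rv t)"
proof -
  have "rv ((rho ^^ i) t) \<in> orb (rv t)" for i
  proof (induct i)
    case 0 then show ?case by (simp add: orb_self)
  next
    case (Suc i)
    have xT: "(rho ^^ i) t \<in> T" using funpow_T t by auto
    have "rho (rv (rho ((rho ^^ i) t))) \<in> orb (rv t)" using rho_rv_rho[OF xT] Suc by simp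
    then have "rv (rho ((rho ^^ i) t)) \<in> orb (rv t)"
      using orb_pre[of "rv t" "rv (rho ((rho ^^ i) t))"] rv_T t rho_T xT by auto
    then show ?case by simp
  qed
  then show "s \<in> orb t \<Longrightarrow> rv s \<in> orb (rv t)" unfolding orb_def by auto
qed

lemma cover: assumes t0: "t0 \<in> T" shows "T \<subseteq> orb t0 \<union> orb (rv t0)"
proof -
  define Ov where "Ov = orb t0 \<union> orb (rv t0)"
  have rt0: "rv t0 \<in> T" using rv_T t0 .
  have Orv: "rv s \<in> Ov" if "s \<in> Ov" for s
    using that rv_orb[OF t0, of s] rv_orb[OF rt0, of s] unfolding Ov_def by auto
  have Orho: "rho s \<in> Ov" if "s \<in> Ov" for s using that orb_rho[of s] unfolding Ov_def by blast
  have Opre: "s \<in> Ov" if "s \<in> T" "rho s \<in> Ov" for s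
    using that orb_pre[OF t0, of s] orb_pre[OF rt0, of s] unfolding Ov_def by blast
  define good where "good P = (\<forall>Q. A P Q \<longrightarrow> (P,Q) \<in> Ov)" for P
  have c1: "good P" if "(P,Q) \<in> Ov" "A P Q" for P Q
    unfolding good_def
  proof (intro allI impI)
    fix R assume AR: "A P R"
    show "(P,R) \<in> Ov"
    proof (cases "R = Q")
      case True then show ?thesis using that by simp
    next
      case False
      have "(Q,P) \<in> Ov" using Orv[OF that(1)] by (simp add: rv_def)
      moreover have "rho (Q,P) = (P,R)" using nxt_eq[of Q P R] that A_sym AR False by (simp add: rho_def)
      ultimately show ?thesis using Orho by metis
    qed
  qed
  have c2: "good Q" if "good P" "A P Q" for P Q
  proof -
    have "(P,Q) \<in> Ov" using that good_def by auto
    then have "(Q, nxt P Q) \<in> Ov" using Orho[of "(P,Q)"] by (simp add: rho_def)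
    then show ?thesis using c1 nxt_A[OF that(2)] by auto
  qed
  obtain P0 Q0 where t0PQ: "t0 = (P0,Q0)" by (cases t0)
  have "t0 \<in> Ov" unfolding Ov_def using orb_self by auto
  then have g0: "good P0" using c1 t0 t0PQ by (auto simp: T_def)
  have P0: "P0 \<in> Om" using t0 t0PQ A_in by (auto simp: T_def)
  have "good P" if "P \<in> Om" for P
  proof -
    have "A\<^sup>*\<^sup>* P0 P" using conn P0 that by auto
    then show ?thesis
      by (induct rule: rtranclp_induct) (use g0 c2 in auto)
  qed
  then show ?thesis unfolding Ov_def[symmetric] using A_in good_def by (auto simp: T_def)
qed

lemma card_orbs: "card (orb ` T) \<le> 2"
proof (cases "T = {}")
  case True then show ?thesis by simp
next
  case False
  then obtain t0 where t0: "t0 \<in> T" by auto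
  have "orb ` T \<subseteq> {orb t0, orb (rv t0)}"
    using cover[OF t0] orb_same t0 rv_T[OF t0] by blast
  then have "card (orb ` T) \<le> card {orb t0, orb (rv t0)}" by (intro card_mono) auto
  also have "\<dots> \<le> 2" by (simp add: card_insert_if)
  finally show ?thesis .
qed

lemma fin_orbs: "finite (orb ` T)" using fin_T by simp

lemma comm_funpow:
  assumes "\<And>t. t \<in> T \<Longrightarrow> F t \<in> T" "\<And>t. t \<in> T \<Longrightarrow> F (rho t) = rho (F t)" "t \<in> T"
  shows "F ((rho ^^ i) t) = (rho ^^ i) (F t)"
  using assms by (induct i) (auto simp: funpow_T)

lemma comm_orb:
  assumes "\<And>t. t \<in> T \<Longrightarrow> F t \<in> T" "\<And>t. t \<in> T \<Longrightarrow> F (rho t) = rho (F t)" "t \<in> T"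
  shows "F ` orb t = orb (F t)"
  unfolding orb_def using comm_funpow[where F=F, OF assms] by (auto simp: image_iff)

lemma comm_two:
  assumes F1: "\<And>t. t \<in> T \<Longrightarrow> F1 t \<in> T" "\<And>t. t \<in> T \<Longrightarrow> F1 (rho t) = rho (F1 t)"
    and F2: "\<And>t. t \<in> T \<Longrightarrow> F2 t \<in> T" "\<And>t. t \<in> T \<Longrightarrow> F2 (rho t) = rho (F2 t)"
    and o1: "F1 t \<in> orb t" and o2: "F2 t \<in> orb t" and t: "t \<in> T"
  shows "F1 (F2 t) = F2 (F1 t)"
proof -
  obtain a where a: "F1 t = (rho ^^ a) t" using o1 unfolding orb_def by auto
  obtain b where b: "F2 t = (rho ^^ b) t" using o2 unfolding orb_def by auto
  have "F1 (F2 t) = (rho ^^ b) ((rho ^^ a) t)" using b a comm_funpow[where F=F1, OF F1 t] by simp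
  also have "\<dots> = (rho ^^ a) ((rho ^^ b) t)" by (metis funpow_add add.commute comp_apply)
  also have "\<dots> = F2 (F1 t)" using b a comm_funpow[where F=F2, OF F2 t] by simp
  finally show ?thesis .
qed

lemma aut_comm:
  assumes fO: "f ` Om \<subseteq> Om" and fi: "inj_on f Om"
    and fA: "\<And>P Q. P \<in> Om \<Longrightarrow> Q \<in> Om \<Longrightarrow> A (f P) (f Q) = A P Q"
    and t: "t \<in> T"
  shows "map_prod f f t \<in> T" "map_prod f f (rho t) = rho (map_prod f f t)"
proof -
  obtain P Q where tPQ: "t = (P,Q)" by (cases t)
  have A1: "A P Q" using t tPQ by (auto simp: T_def)
  have PQ: "P \<in> Om" "Q \<in> Om" using A1 A_in by auto
  show "map_prod f f t \<in> T" using fA PQ A1 tPQ by (auto simp: T_def)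
  have surj: "f ` Om = Om" using endo_inj_surj[OF fin fO fi] .
  have "nxt (f P) (f Q) = f (nxt P Q)"
  proof (cases "\<exists>R. A Q R \<and> R \<noteq> P")
    case True
    then obtain R where R: "A Q R" "R \<noteq> P" by auto
    have RO: "R \<in> Om" using R A_in by auto
    have "nxt P Q = R" using nxt_eq A1 R by auto
    moreover have "nxt (f P) (f Q) = f R"
      using nxt_eq[of "f P" "f Q" "f R"] fA PQ RO A1 R fi by (auto simp: inj_on_def)
    ultimately show ?thesis by simp
  next
    case False
    have "\<not> (\<exists>R. A (f Q) R \<and> R \<noteq> f P)"
    proof
      assume "\<exists>R. A (f Q) R \<and> R \<noteq> f P"
      then obtain R where R: "A (f Q) R" "R \<noteq> f P" by auto
      have "R \<in> Om" using R A_in by auto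
      then obtain R' where R': "R' \<in> Om" "R = f R'" using surj by auto
      then have "A Q R'" "R' \<noteq> P" using fA PQ R by auto
      then show False using False by auto
    qed
    then show ?thesis using nxt_none False by simp
  qed
  then show "map_prod f f (rho t) = rho (map_prod f f t)" using tPQ by (simp add: rho_def)
qed

end




locale hat =
  fixes V :: "'a set" and E :: "'a \<Rightarrow> 'a \<Rightarrow> bool" and G N :: "('a \<Rightarrow> 'a) set"
  assumes sg: "simple_graph V E"
    and cn: "graph_connected V E"
    and tv: "tetravalent V E"
    and sub: "subgroup G (BijGroup V)"
    and aut: "G \<subseteq> graph_aut V E"
    and hat: "half_arc_transitive V E G"
    and nor: "N \<lhd> perm_grp V G"
begin

abbreviation "GG \<equiv> perm_grp V G"

lemma grpGG: "group GG" using group.subgroup_imp_group[OF group_BijGroup sub] .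

lemma carrGG[simp]: "carrier GG = G" by simp

lemma GBij: "g \<in> G \<Longrightarrow> g \<in> Bij V" using subgroup.subset[OF sub] by (auto simp: BijGroup_def)

lemma mulGG[simp]: "g \<in> G \<Longrightarrow> h \<in> G \<Longrightarrow> g \<otimes>\<^bsub>BijGroup V\<^esub> h = compose V g h"
  using GBij by (simp add: BijGroup_def)

lemma oneGG[simp]: "\<one>\<^bsub>BijGroup V\<^esub> = (\<lambda>x\<in>V. x)" by (simp add: BijGroup_def)

lemma invGG: "g \<in> G \<Longrightarrow> inv\<^bsub>GG\<^esub> g = (\<lambda>x\<in>V. inv_into V g x)"
  using group.m_inv_consistent[OF group_BijGroup sub] inv_BijGroup GBij by metis

lemma inv_in: "g \<in> G \<Longrightarrow> inv\<^bsub>GG\<^esub> g \<in> G" using group.inv_closed[OF grpGG] by simp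
lemma mul_in: "g \<in> G \<Longrightarrow> h \<in> G \<Longrightarrow> g \<otimes>\<^bsub>GG\<^esub> h \<in> G" using monoid.m_closed[OF group.is_monoid[OF grpGG]] by simp
lemma one_in: "\<one>\<^bsub>GG\<^esub> \<in> G" using monoid.one_closed[OF group.is_monoid[OF grpGG]] by simp

lemma g_bij: "g \<in> G \<Longrightarrow> bij_betw g V V" using GBij by (simp add: Bij_def)
lemma gV: "g \<in> G \<Longrightarrow> x \<in> V \<Longrightarrow> g x \<in> V" using g_bij bij_betwE by blast
lemma g_inj: "g \<in> G \<Longrightarrow> x \<in> V \<Longrightarrow> y \<in> V \<Longrightarrow> g x = g y \<Longrightarrow> x = y"
  using g_bij by (meson bij_betw_def inj_onD)
lemma g_img: "g \<in> G \<Longrightarrow> g ` V = V" using g_bij bij_betw_imp_surj_on by blast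

lemma app_mul: "g \<in> G \<Longrightarrow> h \<in> G \<Longrightarrow> x \<in> V \<Longrightarrow> (g \<otimes>\<^bsub>GG\<^esub> h) x = g (h x)"
  by (simp add: mulGG compose_def)

lemma app_one: "x \<in> V \<Longrightarrow> \<one>\<^bsub>GG\<^esub> x = x" by (simp add: oneGG)

lemma inv_app1: "g \<in> G \<Longrightarrow> x \<in> V \<Longrightarrow> (inv\<^bsub>GG\<^esub> g) (g x) = x"
  using invGG g_bij gV by (simp add: bij_betw_def inv_into_f_f)
lemma inv_app2: "g \<in> G \<Longrightarrow> x \<in> V \<Longrightarrow> g ((inv\<^bsub>GG\<^esub> g) x) = x"
  using invGG g_bij by (simp add: bij_betw_def f_inv_into_f)
lemma inv_V: "g \<in> G \<Longrightarrow> x \<in> V \<Longrightarrow> (inv\<^bsub>GG\<^esub> g) x \<in> V"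
  using gV inv_in by blast

lemma g_eq_one: assumes "g \<in> G" "\<And>x. x \<in> V \<Longrightarrow> g x = x" shows "g = \<one>\<^bsub>GG\<^esub>"
proof
  fix x show "g x = \<one>\<^bsub>GG\<^esub> x"
    using assms GBij[OF assms(1)] by (cases "x \<in> V") (auto simp: oneGG Bij_def extensional_def)
qed

lemma img_mul: "g \<in> G \<Longrightarrow> h \<in> G \<Longrightarrow> P \<subseteq> V \<Longrightarrow> (g \<otimes>\<^bsub>GG\<^esub> h) ` P = g ` (h ` P)"
proof -
  assume a: "g \<in> G" "h \<in> G" "P \<subseteq> V"
  have "(g \<otimes>\<^bsub>GG\<^esub> h) ` P = (\<lambda>x. g (h x)) ` P" using app_mul a by (intro image_cong) auto
  then show ?thesis by (simp add: image_image)
qed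

lemma img_one: "P \<subseteq> V \<Longrightarrow> \<one>\<^bsub>GG\<^esub> ` P = P"
  using app_one by (auto simp: image_iff subset_iff)

lemma finV: "finite V" using sg by (simp add: simple_graph_def)
lemma E_V: "E u w \<Longrightarrow> u \<in> V \<and> w \<in> V" using sg by (simp add: simple_graph_def)
lemma E_sym: "E u w \<Longrightarrow> E w u" using sg by (simp add: simple_graph_def)
lemma E_irr: "E u w \<Longrightarrow> u \<noteq> w" using sg by (simp add: simple_graph_def)
lemma V_ne: "V \<noteq> {}" using cn by (simp add: graph_connected_def)
lemma conn: "u \<in> V \<Longrightarrow> w \<in> V \<Longrightarrow> E\<^sup>*\<^sup>* u w" using cn by (simp add: graph_connected_def)

definition nbr where "nbr v = {w \<in> V. E v w}"
lemma card_nbr: "v \<in> V \<Longrightarrow> card (nbr v) = 4" using tv by (simp add: tetravalent_def nbr_def)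
lemma fin_nbr: "finite (nbr v)" using finV by (simp add: nbr_def)

lemma autE: "g \<in> G \<Longrightarrow> u \<in> V \<Longrightarrow> w \<in> V \<Longrightarrow> E (g u) (g w) = E u w"
  using aut by (auto simp: graph_aut_def)

lemma autE': "g \<in> G \<Longrightarrow> E u w \<Longrightarrow> E (g u) (g w)" using autE E_V by blast

lemma autE_inv: "g \<in> G \<Longrightarrow> E (g u) (g w) \<Longrightarrow> u \<in> V \<Longrightarrow> w \<in> V \<Longrightarrow> E u w" using autE by blast

lemma N_sub: "subgroup N GG" using nor by (simp add: normal_def)
lemma N_G: "N \<subseteq> G" using subgroup.subset[OF N_sub] by simp
lemma N_G'[simp]: "n \<in> N \<Longrightarrow> n \<in> G" using N_G by auto
lemma N_inv: "n \<in> N \<Longrightarrow> inv\<^bsub>GG\<^esub> n \<in> N" using subgroup.m_inv_closed[OF N_sub] by simp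
lemma N_mul: "n \<in> N \<Longrightarrow> m \<in> N \<Longrightarrow> n \<otimes>\<^bsub>GG\<^esub> m \<in> N" using subgroup.m_closed[OF N_sub] by simp
lemma N_one: "\<one>\<^bsub>GG\<^esub> \<in> N" using subgroup.one_closed[OF N_sub] by simp
lemma N_conj: "g \<in> G \<Longrightarrow> n \<in> N \<Longrightarrow> g \<otimes>\<^bsub>GG\<^esub> n \<otimes>\<^bsub>GG\<^esub> inv\<^bsub>GG\<^esub> g \<in> N"
  using normal.inv_op_closed2[OF nor] by simp

abbreviation "B \<equiv> orbit_of N"

lemma B_self: assumes "x \<in> V" shows "x \<in> B x"
proof -
  have "\<one>\<^bsub>GG\<^esub> x = x" using app_one assms by simp
  then show ?thesis using N_one unfolding orbit_of_def by (metis (mono_tags, lifting) mem_Collect_eq)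
qed

lemma B_sub: "x \<in> V \<Longrightarrow> B x \<subseteq> V" using N_G gV unfolding orbit_of_def by blast

lemma B_mem: "y \<in> B x \<longleftrightarrow> (\<exists>n\<in>N. y = n x)" unfolding orbit_of_def by auto

lemma B_n: assumes "n \<in> N" "x \<in> V" shows "B (n x) = B x"
proof
  show "B (n x) \<subseteq> B x"
  proof
    fix y assume "y \<in> B (n x)"
    then obtain m where m: "m \<in> N" "y = m (n x)" by (auto simp: B_mem)
    then have "y = (m \<otimes>\<^bsub>GG\<^esub> n) x" using app_mul assms N_G by auto
    then show "y \<in> B x" using N_mul m assms by (auto simp: B_mem)
  qed
  show "B x \<subseteq> B (n x)"
  proof
    fix y assume "y \<in> B x"
    then obtain m where m: "m \<in> N" "y = m x" by (auto simp: B_mem)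
    have "x = (inv\<^bsub>GG\<^esub> n) (n x)" using inv_app1 assms N_G by auto
    moreover have "(m \<otimes>\<^bsub>GG\<^esub> inv\<^bsub>GG\<^esub> n) (n x) = m ((inv\<^bsub>GG\<^esub> n) (n x))"
      using app_mul[of m "inv\<^bsub>GG\<^esub> n" "n x"] m assms inv_in gV by simp
    ultimately have "y = (m \<otimes>\<^bsub>GG\<^esub> inv\<^bsub>GG\<^esub> n) (n x)" using m by simp
    then show "y \<in> B (n x)" using N_mul N_inv m assms by (auto simp: B_mem)
  qed
qed

lemma B_eq: "x \<in> V \<Longrightarrow> y \<in> B x \<Longrightarrow> B y = B x" using B_n by (auto simp: B_mem)

lemma B_eq_iff: "x \<in> V \<Longrightarrow> y \<in> V \<Longrightarrow> B x = B y \<longleftrightarrow> y \<in> B x"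
  using B_eq B_self by metis

lemma B_g: assumes g: "g \<in> G" and x: "x \<in> V" shows "g ` B x = B (g x)"
proof
  show "g ` B x \<subseteq> B (g x)"
  proof
    fix y assume "y \<in> g ` B x"
    then obtain n where n: "n \<in> N" "y = g (n x)" by (auto simp: B_mem)
    have "(g \<otimes>\<^bsub>GG\<^esub> n \<otimes>\<^bsub>GG\<^esub> inv\<^bsub>GG\<^esub> g) (g x) = (g \<otimes>\<^bsub>GG\<^esub> n) ((inv\<^bsub>GG\<^esub> g) (g x))"
      using app_mul[of "g \<otimes>\<^bsub>GG\<^esub> n" "inv\<^bsub>GG\<^esub> g" "g x"] g x n mul_in inv_in gV by simp
    also have "\<dots> = g (n x)" using inv_app1 app_mul g x n by simp
    finally have "(g \<otimes>\<^bsub>GG\<^esub> n \<otimes>\<^bsub>GG\<^esub> inv\<^bsub>GG\<^esub> g) (g x) = g (n x)" .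
    then show "y \<in> B (g x)" using N_conj[OF g n(1)] n by (metis B_mem)
  qed
  show "B (g x) \<subseteq> g ` B x"
  proof
    fix y assume "y \<in> B (g x)"
    then obtain n where n: "n \<in> N" "y = n (g x)" by (auto simp: B_mem)
    define m where "m = inv\<^bsub>GG\<^esub> g \<otimes>\<^bsub>GG\<^esub> n \<otimes>\<^bsub>GG\<^esub> inv\<^bsub>GG\<^esub> (inv\<^bsub>GG\<^esub> g)"
    have m: "m \<in> N" using N_conj[OF inv_in[OF g] n(1)] m_def by simp
    have ii: "inv\<^bsub>GG\<^esub> (inv\<^bsub>GG\<^esub> g) = g" using group.inv_inv[OF grpGG] g by simp
    have "m x = (inv\<^bsub>GG\<^esub> g \<otimes>\<^bsub>GG\<^esub> n) (g x)"
      unfolding m_def ii using app_mul[of "inv\<^bsub>GG\<^esub> g \<otimes>\<^bsub>GG\<^esub> n" g x] g x n mul_in inv_in by simp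
    also have "\<dots> = (inv\<^bsub>GG\<^esub> g) (n (g x))"
      using app_mul[of "inv\<^bsub>GG\<^esub> g" n "g x"] g x n inv_in gV by simp
    finally have "m x = (inv\<^bsub>GG\<^esub> g) (n (g x))" .
    then have "g (m x) = y" using inv_app2 g n gV N_G x by auto
    then show "y \<in> g ` B x" using m by (metis B_mem imageI)
  qed
qed

lemma B_g_eq: "g \<in> G \<Longrightarrow> x \<in> V \<Longrightarrow> y \<in> V \<Longrightarrow> B x = B y \<Longrightarrow> B (g x) = B (g y)"
  using B_g by metis

abbreviation "Om \<equiv> quotient_vertices V N"
lemma Om_def': "Om = B ` V" by (simp add: quotient_vertices_def)
lemma fin_Om: "finite Om" using finV Om_def' by simp

text \<open>Orientation\<close>

lemma vtrans: "u \<in> V \<Longrightarrow> v \<in> V \<Longrightarrow> \<exists>g\<in>G. g u = v"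
  using hat by (simp add: half_arc_transitive_def)

lemma ex_edge: "\<exists>p. E (fst p) (snd p)"
proof -
  obtain v where v: "v \<in> V" using V_ne by auto
  have "nbr v \<noteq> {}" using card_nbr[OF v] by auto
  then obtain w where "E v w" by (auto simp: nbr_def)
  then show ?thesis by (intro exI[of _ "(v,w)"]) simp
qed

definition ab0 where "ab0 = (SOME p. E (fst p) (snd p))"
abbreviation "a0 \<equiv> fst ab0"
abbreviation "b0 \<equiv> snd ab0"
lemma ab0: "E a0 b0" unfolding ab0_def using someI_ex[OF ex_edge] .
lemma a0V: "a0 \<in> V" and b0V: "b0 \<in> V" using ab0 E_V by auto

definition Dir where "Dir u w \<longleftrightarrow> (\<exists>g\<in>G. g a0 = u \<and> g b0 = w)"

lemma Dir_E: "Dir u w \<Longrightarrow> E u w" using autE' ab0 by (auto simp: Dir_def)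
lemma Dir_V: "Dir u w \<Longrightarrow> u \<in> V \<and> w \<in> V" using Dir_E E_V by blast

lemma Dir_g: assumes g: "g \<in> G" and d: "Dir u w" shows "Dir (g u) (g w)"
proof -
  obtain h where h: "h \<in> G" "h a0 = u" "h b0 = w" using d by (auto simp: Dir_def)
  have "(g \<otimes>\<^bsub>GG\<^esub> h) a0 = g u" "(g \<otimes>\<^bsub>GG\<^esub> h) b0 = g w"
    using app_mul[OF g h(1)] a0V b0V h by auto
  then show ?thesis using mul_in[OF g h(1)] unfolding Dir_def by blast
qed

lemma Dir_trans: assumes d1: "Dir u w" and d2: "Dir u' w'" shows "\<exists>g\<in>G. g u = u' \<and> g w = w'"
proof -
  obtain h1 where h1: "h1 \<in> G" "h1 a0 = u" "h1 b0 = w" using d1 by (auto simp: Dir_def)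
  obtain h2 where h2: "h2 \<in> G" "h2 a0 = u'" "h2 b0 = w'" using d2 by (auto simp: Dir_def)
  define g where "g = h2 \<otimes>\<^bsub>GG\<^esub> inv\<^bsub>GG\<^esub> h1"
  have g: "g \<in> G" using g_def mul_in inv_in h1 h2 by auto
  have "g u = u'" using g_def h1 h2 app_mul[OF h2(1) inv_in[OF h1(1)]] inv_app1 a0V gV by auto
  moreover have "g w = w'" using g_def h1 h2 app_mul[OF h2(1) inv_in[OF h1(1)]] inv_app1 b0V gV by auto
  ultimately show ?thesis using g by auto
qed

lemma E_Dir: assumes e: "E u w" shows "Dir u w \<or> Dir w u"
proof -
  have "{a0,b0} \<in> graph_edges E" "{u,w} \<in> graph_edges E" using ab0 e by (auto simp: graph_edges_def)
  then obtain g where g: "g \<in> G" "g ` {a0,b0} = {u,w}"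
    using hat unfolding half_arc_transitive_def by blast
  have "g a0 \<noteq> g b0" using g_inj[OF g(1) a0V b0V] E_irr[OF ab0] by auto
  then have "(g a0 = u \<and> g b0 = w) \<or> (g a0 = w \<and> g b0 = u)" using g(2) by (auto simp: doubleton_eq_iff)
  then show ?thesis using g(1) unfolding Dir_def by blast
qed

lemma Dir_asym: assumes d1: "Dir u w" shows "\<not> Dir w u"
proof
  assume d2: "Dir w u"
  obtain h where h: "h \<in> G" "h a0 = u" "h b0 = w" using d1 by (auto simp: Dir_def)
  obtain g where g: "g \<in> G" "g u = w" "g w = u" using Dir_trans[OF d1 d2] by auto
  define k where "k = inv\<^bsub>GG\<^esub> h \<otimes>\<^bsub>GG\<^esub> g \<otimes>\<^bsub>GG\<^esub> h"
  have k: "k \<in> G" using k_def mul_in inv_in h g by auto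
  have uV: "u \<in> V" "w \<in> V" using d1 Dir_V by auto
  have "k a0 = (inv\<^bsub>GG\<^esub> h \<otimes>\<^bsub>GG\<^esub> g) u" using k_def app_mul[OF mul_in[OF inv_in[OF h(1)] g(1)] h(1)] a0V h by auto
  also have "\<dots> = (inv\<^bsub>GG\<^esub> h) (h b0)" using app_mul[OF inv_in[OF h(1)] g(1)] uV g h by simp
  also have "\<dots> = b0" by (metis inv_app1 h(1) b0V)
  finally have ka: "k a0 = b0" .
  have "k b0 = (inv\<^bsub>GG\<^esub> h \<otimes>\<^bsub>GG\<^esub> g) w" using k_def app_mul[OF mul_in[OF inv_in[OF h(1)] g(1)] h(1)] b0V h by auto
  also have "\<dots> = (inv\<^bsub>GG\<^esub> h) (h a0)" using app_mul[OF inv_in[OF h(1)] g(1)] uV g h by simp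
  also have "\<dots> = a0" by (metis inv_app1 h(1) a0V)
  finally have kb: "k b0 = a0" .
  have all: "Dir x y" if "E x y" for x y
  proof (cases "Dir x y")
    case False
    then have "Dir y x" using E_Dir that by auto
    then obtain h' where h': "h' \<in> G" "h' a0 = y" "h' b0 = x" by (auto simp: Dir_def)
    have "(h' \<otimes>\<^bsub>GG\<^esub> k) a0 = x" "(h' \<otimes>\<^bsub>GG\<^esub> k) b0 = y"
      using app_mul[OF h'(1) k] a0V b0V ka kb h' by auto
    then show ?thesis using mul_in[OF h'(1) k] unfolding Dir_def by blast
  qed simp
  have "\<forall>a\<in>graph_arcs E. \<forall>b\<in>graph_arcs E. \<exists>g\<in>G. (g (fst a), g (snd a)) = b"
  proof (intro ballI)
    fix a b assume "a \<in> graph_arcs E" "b \<in> graph_arcs E"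
    then have "Dir (fst a) (snd a)" "Dir (fst b) (snd b)" using all by (auto simp: graph_arcs_def)
    then obtain g where "g \<in> G" "g (fst a) = fst b" "g (snd a) = snd b" using Dir_trans by blast
    then show "\<exists>g\<in>G. (g (fst a), g (snd a)) = b" by (intro bexI[of _ g]) auto
  qed
  then show False using hat by (simp add: half_arc_transitive_def)
qed

definition Out where "Out v = {w. Dir v w}"
definition In where "In v = {w. Dir w v}"

lemma nbr_split: "nbr v = Out v \<union> In v"
  using Dir_E E_Dir E_sym Dir_V by (auto simp: nbr_def Out_def In_def)
lemma Out_In_disj: "Out v \<inter> In v = {}" using Dir_asym by (auto simp: Out_def In_def)
lemma Out_sub: "Out v \<subseteq> V" and In_sub: "In v \<subseteq> V" using Dir_V by (auto simp: Out_def In_def)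
lemma fin_Out: "finite (Out v)" using Out_sub finV finite_subset by blast
lemma fin_In: "finite (In v)" using In_sub finV finite_subset by blast

lemma Dir_g_iff: "g \<in> G \<Longrightarrow> u \<in> V \<Longrightarrow> w \<in> V \<Longrightarrow> Dir (g u) (g w) \<longleftrightarrow> Dir u w"
  using Dir_g[of "inv\<^bsub>GG\<^esub> g"] Dir_g[of g] inv_in inv_app1 by metis

lemma Out_g: assumes g: "g \<in> G" and v: "v \<in> V" shows "g ` Out v = Out (g v)"
proof
  show "g ` Out v \<subseteq> Out (g v)" using Dir_g g by (auto simp: Out_def)
  show "Out (g v) \<subseteq> g ` Out v"
  proof
    fix w assume "w \<in> Out (g v)"
    then have d: "Dir (g v) w" by (simp add: Out_def)
    then have wV: "w \<in> V" using Dir_V by auto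
    have "Dir (g v) (g ((inv\<^bsub>GG\<^esub> g) w))" by (subst inv_app2[OF g wV]) (rule d)
    then have "Dir v ((inv\<^bsub>GG\<^esub> g) w)" using Dir_g_iff g v inv_V wV by blast
    moreover have "w = g ((inv\<^bsub>GG\<^esub> g) w)" by (rule inv_app2[OF g wV, symmetric])
    ultimately show "w \<in> g ` Out v" by (metis (mono_tags) Out_def image_eqI mem_Collect_eq)
  qed
qed

lemma In_g: assumes g: "g \<in> G" and v: "v \<in> V" shows "g ` In v = In (g v)"
proof
  show "g ` In v \<subseteq> In (g v)" using Dir_g g by (auto simp: In_def)
  show "In (g v) \<subseteq> g ` In v"
  proof
    fix w assume "w \<in> In (g v)"
    then have d: "Dir w (g v)" by (simp add: In_def)
    then have wV: "w \<in> V" using Dir_V by auto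
    have "Dir (g ((inv\<^bsub>GG\<^esub> g) w)) (g v)" by (subst inv_app2[OF g wV]) (rule d)
    then have "Dir ((inv\<^bsub>GG\<^esub> g) w) v" using Dir_g_iff g v inv_V wV by blast
    moreover have "w = g ((inv\<^bsub>GG\<^esub> g) w)" by (rule inv_app2[OF g wV, symmetric])
    ultimately show "w \<in> g ` In v" by (metis (mono_tags) In_def image_eqI mem_Collect_eq)
  qed
qed

lemma card_Out_const: assumes v: "v \<in> V" shows "card (Out v) = card (Out a0)" "card (In v) = card (In a0)"
proof -
  obtain g where g: "g \<in> G" "g a0 = v" using vtrans a0V v by blast
  have inj: "inj_on g V" using g_bij[OF g(1)] by (simp add: bij_betw_def)
  show "card (Out v) = card (Out a0)" using Out_g[OF g(1) a0V] g(2) card_image inj_on_subset[OF inj Out_sub] by metis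
  show "card (In v) = card (In a0)" using In_g[OF g(1) a0V] g(2) card_image inj_on_subset[OF inj In_sub] by metis
qed

lemma card_Out_In: assumes v: "v \<in> V" shows "card (Out v) = 2" "card (In v) = 2"
proof -
  define DS where "DS = {(u,w). Dir u w}"
  have DS1: "DS = Sigma V Out" using Dir_V by (auto simp: DS_def Out_def)
  have DS2: "prod.swap ` DS = Sigma V In" using Dir_V by (auto simp: DS_def In_def image_iff)
  have "card DS = (\<Sum>u\<in>V. card (Out u))" using DS1 card_SigmaI finV fin_Out by simp
  also have "\<dots> = card V * card (Out a0)" using card_Out_const by simp
  finally have c1: "card DS = card V * card (Out a0)" .
  have "card (prod.swap ` DS) = (\<Sum>u\<in>V. card (In u))" using DS2 card_SigmaI finV fin_In by simp
  also have "\<dots> = card V * card (In a0)" using card_Out_const by simp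
  finally have c2: "card (prod.swap ` DS) = card V * card (In a0)" .
  have "card (prod.swap ` DS) = card DS" by (simp add: card_image)
  then have eq: "card (Out a0) = card (In a0)" using c1 c2 finV V_ne by simp
  have "card (Out a0) + card (In a0) = 4"
    using card_nbr[OF a0V] nbr_split card_Un_disjoint[OF fin_Out fin_In Out_In_disj] by simp
  then have "card (Out a0) = 2" "card (In a0) = 2" using eq by auto
  then show "card (Out v) = 2" "card (In v) = 2" using card_Out_const[OF v] by auto
qed

end



context hat begin

definition Fix where "Fix S = {g \<in> carrier GG. \<forall>y\<in>S. g y = y}"

lemma Fix_subgroup: assumes "S \<subseteq> V" shows "subgroup (Fix S) GG"
  unfolding Fix_def
  by (rule group.stab_subgroup[OF grpGG]) (use assms app_mul app_one in auto)

lemma Fix_G: "Fix S \<subseteq> G" by (auto simp: Fix_def)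

fun ball :: "nat \<Rightarrow> 'a set" where
  "ball 0 = {a0}"
| "ball (Suc k) = ball k \<union> {w. \<exists>x\<in>ball k. E x w}"

lemma ball_V: "ball k \<subseteq> V" by (induct k) (auto simp: a0V dest: E_V)

lemma ball_mono: "k \<le> k' \<Longrightarrow> ball k \<subseteq> ball k'"
  by (rule lift_Suc_mono_le[of ball]) auto

lemma ball_reach: "E\<^sup>*\<^sup>* a0 v \<Longrightarrow> \<exists>k. v \<in> ball k"
proof (induct rule: rtranclp_induct)
  case base then show ?case by (intro exI[of _ 0]) simp
next
  case (step y z)
  then obtain k where "y \<in> ball k" by auto
  then have "z \<in> ball (Suc k)" using step by auto
  then show ?case by blast
qed

lemma ball_all: "\<exists>K. V \<subseteq> ball K"
proof -
  have "F \<subseteq> V \<Longrightarrow> \<exists>K. F \<subseteq> ball K" if "finite F" for F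
    using that
  proof (induct F rule: finite_induct)
    case empty then show ?case by auto
  next
    case (insert x F)
    then obtain K where K: "F \<subseteq> ball K" by auto
    obtain k where k: "x \<in> ball k" using ball_reach conn a0V insert by blast
    have "F \<subseteq> ball (max K k)" "x \<in> ball (max K k)" using K k ball_mono[of K "max K k"] ball_mono[of k "max K k"] by auto
    then show ?case by blast
  qed
  then show ?thesis using finV by blast
qed

lemma inv_fix: "a \<in> G \<Longrightarrow> y \<in> V \<Longrightarrow> a y = y \<Longrightarrow> (inv\<^bsub>GG\<^esub> a) y = y"
  by (metis inv_app1)

lemma Out_fix: "a \<in> G \<Longrightarrow> x \<in> V \<Longrightarrow> a x = x \<Longrightarrow> a ` Out x = Out x"
  using Out_g by metis
lemma In_fix: "a \<in> G \<Longrightarrow> x \<in> V \<Longrightarrow> a x = x \<Longrightarrow> a ` In x = In x"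
  using In_g by metis

lemma inj_G: "a \<in> G \<Longrightarrow> inj_on a X \<Longrightarrow> True" by simp

lemma two_comm_OutIn:
  assumes a: "a \<in> G" and b: "b \<in> G" and x: "x \<in> V" and ax: "a x = x" and bx: "b x = x"
    and y: "E x y"
  shows "a (b y) = b (a y)"
proof -
  have ia: "inj_on a V" "inj_on b V" using g_bij a b by (auto simp: bij_betw_def)
  have "y \<in> Out x \<or> y \<in> In x" using y nbr_split E_V by (auto simp: nbr_def)
  then show ?thesis
  proof
    assume yo: "y \<in> Out x"
    show ?thesis
      by (rule two_commute[OF fin_Out _ _ _ _ _ yo])
         (use card_Out_In[OF x] Out_fix[OF a x ax] Out_fix[OF b x bx] inj_on_subset[OF ia(1) Out_sub]
              inj_on_subset[OF ia(2) Out_sub] in auto)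
  next
    assume yo: "y \<in> In x"
    show ?thesis
      by (rule two_commute[OF fin_In _ _ _ _ _ yo])
         (use card_Out_In[OF x] In_fix[OF a x ax] In_fix[OF b x bx] inj_on_subset[OF ia(1) In_sub]
              inj_on_subset[OF ia(2) In_sub] in auto)
  qed
qed

lemma derived_step:
  assumes H: "H \<subseteq> Fix S" and S: "S \<subseteq> V"
  shows "derived GG H \<subseteq> Fix (S \<union> {w. \<exists>x\<in>S. E x w})"
proof (rule group.derived_sub_by_comm[OF grpGG])
  define S' where "S' = S \<union> {w. \<exists>x\<in>S. E x w}"
  have S'V: "S' \<subseteq> V" using S E_V S'_def by auto
  show "subgroup (Fix (S \<union> {w. \<exists>x\<in>S. E x w})) GG" using Fix_subgroup S'V S'_def by simp
  show "H \<subseteq> carrier GG" using H Fix_G by auto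
  fix a b assume a: "a \<in> H" and b: "b \<in> H"
  have aG: "a \<in> G" and bG: "b \<in> G" using a b H Fix_G by auto
  have aS: "\<And>y. y \<in> S \<Longrightarrow> a y = y" and bS: "\<And>y. y \<in> S \<Longrightarrow> b y = y" using a b H by (auto simp: Fix_def)
  have cl: "(inv\<^bsub>GG\<^esub> c) y \<in> S'" if c: "c \<in> G" "\<And>y. y \<in> S \<Longrightarrow> c y = y" and y: "y \<in> S'" for c y
  proof (cases "y \<in> S")
    case True then show ?thesis using inv_fix c S S'_def by auto
  next
    case False
    then obtain x where x: "x \<in> S" "E x y" using y S'_def by auto
    have "E ((inv\<^bsub>GG\<^esub> c) x) ((inv\<^bsub>GG\<^esub> c) y)" using autE' inv_in c x by blast
    moreover have "(inv\<^bsub>GG\<^esub> c) x = x" using inv_fix c x S by auto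
    ultimately show ?thesis using x S'_def by auto
  qed
  have "(a \<otimes>\<^bsub>GG\<^esub> b \<otimes>\<^bsub>GG\<^esub> inv\<^bsub>GG\<^esub> a \<otimes>\<^bsub>GG\<^esub> inv\<^bsub>GG\<^esub> b) y = y" if y: "y \<in> S'" for y
  proof (rule group.comm_fix[OF grpGG, where act="\<lambda>g x. g x" and Y=S'])
    show "a \<in> carrier GG" "b \<in> carrier GG" using aG bG by auto
    show "\<And>c d y. c \<in> carrier GG \<Longrightarrow> d \<in> carrier GG \<Longrightarrow> y \<in> S' \<Longrightarrow> (c \<otimes>\<^bsub>GG\<^esub> d) y = c (d y)"
      using app_mul S'V by auto
    show "\<And>y. y \<in> S' \<Longrightarrow> \<one>\<^bsub>GG\<^esub> y = y" using app_one S'V by auto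
    show "\<And>y. y \<in> S' \<Longrightarrow> (inv\<^bsub>GG\<^esub> a) y \<in> S'" using cl aG aS by blast
    show "\<And>y. y \<in> S' \<Longrightarrow> (inv\<^bsub>GG\<^esub> b) y \<in> S'" using cl bG bS by blast
    show "y \<in> S'" by fact
    fix z assume z: "z \<in> S'"
    show "a (b z) = b (a z)"
    proof (cases "z \<in> S")
      case True then show ?thesis using aS bS by simp
    next
      case False
      then obtain x where x: "x \<in> S" "E x z" using z S'_def by auto
      show ?thesis using two_comm_OutIn[OF aG bG _ aS bS x(2)] x S by auto
    qed
  qed
  then show "a \<otimes>\<^bsub>GG\<^esub> b \<otimes>\<^bsub>GG\<^esub> inv\<^bsub>GG\<^esub> a \<otimes>\<^bsub>GG\<^esub> inv\<^bsub>GG\<^esub> b \<in> Fix (S \<union> {w. \<exists>x\<in>S. E x w})"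
    using aG bG mul_in inv_in S'_def by (auto simp: Fix_def)
qed

lemma derived_ball: "(derived GG ^^ k) (Fix {a0}) \<subseteq> Fix (ball k)"
proof (induct k)
  case 0 then show ?case by simp
next
  case (Suc k)
  show ?case using derived_step[OF Suc ball_V] by simp
qed

lemma stab_solv: "\<exists>k. (derived GG ^^ k) (Fix {a0}) \<subseteq> {\<one>\<^bsub>GG\<^esub>}"
proof -
  obtain K where K: "V \<subseteq> ball K" using ball_all by auto
  have "Fix (ball K) \<subseteq> {\<one>\<^bsub>GG\<^esub>}"
  proof
    fix g assume "g \<in> Fix (ball K)"
    then have "g \<in> G" "\<And>x. x \<in> V \<Longrightarrow> g x = x" using K by (auto simp: Fix_def)
    then show "g \<in> {\<one>\<^bsub>GG\<^esub>}" using g_eq_one by simp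
  qed
  then show ?thesis using derived_ball by blast
qed

end



context hat begin

lemma Om_B: "P \<in> Om \<longleftrightarrow> (\<exists>v\<in>V. P = B v)" using Om_def' by auto

lemma lemQ: assumes v: "v \<in> V"
  shows "{C \<in> Om. quotient_adj E (B v) C} = B ` nbr v - {B v}"
proof
  show "{C \<in> Om. quotient_adj E (B v) C} \<subseteq> B ` nbr v - {B v}"
  proof
    fix C assume C: "C \<in> {C \<in> Om. quotient_adj E (B v) C}"
    then obtain z where z: "z \<in> V" "C = B z" using Om_B by auto
    from C have ne: "B v \<noteq> C" and ex: "\<exists>u\<in>B v. \<exists>w\<in>C. E u w" by (auto simp: quotient_adj_def)
    then obtain u w where u: "u \<in> B v" and w: "w \<in> C" and e: "E u w" by auto
    obtain n where n: "n \<in> N" "u = n v" using u B_mem by auto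
    have wV: "w \<in> V" using e E_V by auto
    have "n ((inv\<^bsub>GG\<^esub> n) w) = w" by (rule inv_app2) (use n wV in auto)
    then have "E (n v) (n ((inv\<^bsub>GG\<^esub> n) w))" using e n by simp
    then have e2: "E v ((inv\<^bsub>GG\<^esub> n) w)" using autE_inv[of n] n v inv_V wV by simp
    have "B ((inv\<^bsub>GG\<^esub> n) w) = B w" using B_n N_inv n wV by simp
    also have "\<dots> = C" using B_eq z w by simp
    finally have "C = B ((inv\<^bsub>GG\<^esub> n) w)" by simp
    moreover have "(inv\<^bsub>GG\<^esub> n) w \<in> nbr v" using e2 inv_V n wV by (auto simp: nbr_def)
    ultimately show "C \<in> B ` nbr v - {B v}" using ne by blast
  qed
  show "B ` nbr v - {B v} \<subseteq> {C \<in> Om. quotient_adj E (B v) C}"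
  proof
    fix C assume "C \<in> B ` nbr v - {B v}"
    then obtain w where w: "w \<in> nbr v" "C = B w" "B w \<noteq> B v" by auto
    have "v \<in> B v" "w \<in> B w" using B_self v w(1) by (auto simp: nbr_def)
    then have "quotient_adj E (B v) C" using w by (auto simp: quotient_adj_def nbr_def)
    moreover have "C \<in> Om" using w Om_B by (auto simp: nbr_def)
    ultimately show "C \<in> {C \<in> Om. quotient_adj E (B v) C}" by simp
  qed
qed

definition good where "good \<longleftrightarrow> (\<forall>v\<in>V. inj_on B (insert v (nbr v)))"

lemma good_semireg: assumes g: good shows "semiregular V N"
  unfolding semiregular_def
proof (intro ballI impI)
  fix v n assume v: "v \<in> V" and n: "n \<in> N" and nv: "n v = v"
  have nG: "n \<in> G" using n by simp
  have stp: "n w = w" if x: "x \<in> V" "n x = x" and e: "E x w" for x w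
  proof -
    have wV: "w \<in> V" using e E_V by auto
    have "E x (n w)" using autE'[OF nG e] x by simp
    then have "n w \<in> nbr x" "w \<in> nbr x" using e wV gV[OF nG wV] by (auto simp: nbr_def)
    moreover have "B (n w) = B w" using B_n n wV by simp
    ultimately show "n w = w" using g x unfolding good_def inj_on_def by blast
  qed
  have "n x = x" if x: "x \<in> V" for x
  proof -
    have "E\<^sup>*\<^sup>* v x" using conn v x by auto
    then show ?thesis
    proof (induct rule: rtranclp_induct)
      case base then show ?case using nv .
    next
      case (step y z)
      then show ?case using stp E_V by blast
    qed
  qed
  then have "n = \<one>\<^bsub>GG\<^esub>" using g_eq_one nG by auto
  then show "n = (\<lambda>x\<in>V. x)" by simp
qed

lemma good_cover: assumes g: good shows "normal_cover_tetra V E N"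
  unfolding normal_cover_tetra_def
proof
  fix P assume "P \<in> Om"
  then obtain v where v: "v \<in> V" "P = B v" using Om_B by auto
  have inj: "inj_on B (insert v (nbr v))" using g v unfolding good_def by auto
  have "B v \<notin> B ` nbr v"
  proof
    assume "B v \<in> B ` nbr v"
    then obtain w where w: "w \<in> nbr v" "B v = B w" by auto
    have "w \<noteq> v" using w E_irr by (auto simp: nbr_def)
    then show False using inj w unfolding inj_on_def by blast
  qed
  then have "{C \<in> Om. quotient_adj E P C} = B ` nbr v" using lemQ[OF v(1)] v by auto
  also have "card \<dots> = card (nbr v)" using inj by (intro card_image) (auto intro: inj_on_subset)
  finally show "card {C \<in> Om. quotient_adj E P C} = 4" using card_nbr v by simp
qed

lemma sigma_inj:
  assumes Rv: "\<And>u w. R u w \<Longrightarrow> u \<in> V \<and> w \<in> V"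
    and RN: "\<And>n u w. n \<in> N \<Longrightarrow> R u w \<Longrightarrow> R (n u) (n w)"
    and pred: "\<And>u. u \<in> V \<Longrightarrow> \<exists>c. R c u"
    and same: "\<And>u w1 w2. R u w1 \<Longrightarrow> R u w2 \<Longrightarrow> B w1 = B w2"
    and r1: "R c1 u" and r2: "R c2 u"
  shows "B c1 = B c2"
proof -
  define sig where "sig P = B (SOME w. \<exists>u\<in>P. R u w)" for P
  have key: "sig (B u) = B w" if r: "R u w" for u w
  proof -
    have uV: "u \<in> V" "w \<in> V" using Rv r by auto
    have ex: "\<exists>w. \<exists>u'\<in>B u. R u' w" using r B_self uV by blast
    define w' where "w' = (SOME w. \<exists>u'\<in>B u. R u' w)"
    have "\<exists>u'\<in>B u. R u' w'" using someI_ex[OF ex] w'_def by simp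
    then obtain u' where u': "u' \<in> B u" "R u' w'" by auto
    obtain n where n: "n \<in> N" "u' = n u" using u' B_mem by auto
    have w'V: "w' \<in> V" using Rv u' by auto
    have "R ((inv\<^bsub>GG\<^esub> n) u') ((inv\<^bsub>GG\<^esub> n) w')" using RN N_inv n u' by auto
    moreover have "(inv\<^bsub>GG\<^esub> n) u' = u" using n inv_app1[of n u] uV by simp
    ultimately have "R u ((inv\<^bsub>GG\<^esub> n) w')" by simp
    then have "B ((inv\<^bsub>GG\<^esub> n) w') = B w" using same r by blast
    moreover have "B ((inv\<^bsub>GG\<^esub> n) w') = B w'" using B_n N_inv n w'V by simp
    ultimately show ?thesis unfolding sig_def w'_def[symmetric] by simp
  qed
  have "Om \<subseteq> sig ` Om"
  proof
    fix P assume "P \<in> Om"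
    then obtain u where u: "u \<in> V" "P = B u" using Om_B by auto
    obtain c where c: "R c u" using pred u by auto
    have "B c \<in> Om" using c Rv Om_B by auto
    then show "P \<in> sig ` Om" using key[OF c] u by auto
  qed
  then have inj: "inj_on sig Om" using finite_surj_inj[OF fin_Om] by auto
  have "B c1 \<in> Om" "B c2 \<in> Om" using r1 r2 Rv Om_B by auto
  moreover have "sig (B c1) = sig (B c2)" using key r1 r2 by simp
  ultimately show ?thesis using inj by (auto dest: inj_onD)
qed

lemma Out_ne: assumes "u \<in> V" shows "\<exists>w. Dir u w"
proof -
  have "Out u \<noteq> {}" using card_Out_In(1)[OF assms] by auto
  then show ?thesis by (auto simp: Out_def)
qed
lemma In_ne: assumes "u \<in> V" shows "\<exists>w. Dir w u"
proof -
  have "In u \<noteq> {}" using card_Out_In(2)[OF assms] by auto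
  then show ?thesis by (auto simp: In_def)
qed

lemma allOut_allIn:
  assumes "\<And>u w1 w2. Dir u w1 \<Longrightarrow> Dir u w2 \<Longrightarrow> B w1 = B w2"
  shows "Dir c1 u \<Longrightarrow> Dir c2 u \<Longrightarrow> B c1 = B c2"
proof -
  show "Dir c1 u \<Longrightarrow> Dir c2 u \<Longrightarrow> B c1 = B c2"
  proof (rule sigma_inj[where R=Dir])
    show "\<And>u w. Dir u w \<Longrightarrow> u \<in> V \<and> w \<in> V" using Dir_V by blast
    show "\<And>n u w. n \<in> N \<Longrightarrow> Dir u w \<Longrightarrow> Dir (n u) (n w)" using Dir_g N_G' by blast
    show "\<And>u. u \<in> V \<Longrightarrow> \<exists>c. Dir c u" using In_ne by blast
    show "\<And>u w1 w2. Dir u w1 \<Longrightarrow> Dir u w2 \<Longrightarrow> B w1 = B w2" using assms by blast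
  qed
qed

lemma allIn_allOut:
  assumes "\<And>u w1 w2. Dir w1 u \<Longrightarrow> Dir w2 u \<Longrightarrow> B w1 = B w2"
  shows "Dir u c1 \<Longrightarrow> Dir u c2 \<Longrightarrow> B c1 = B c2"
proof -
  show "Dir u c1 \<Longrightarrow> Dir u c2 \<Longrightarrow> B c1 = B c2"
  proof (rule sigma_inj[where R="\<lambda>x y. Dir y x"])
    show "\<And>u w. Dir w u \<Longrightarrow> u \<in> V \<and> w \<in> V" using Dir_V by blast
    show "\<And>n u w. n \<in> N \<Longrightarrow> Dir w u \<Longrightarrow> Dir (n w) (n u)" using Dir_g N_G' by blast
    show "\<And>u. u \<in> V \<Longrightarrow> \<exists>c. Dir u c" using Out_ne by blast
    show "\<And>u w1 w2. Dir w1 u \<Longrightarrow> Dir w2 u \<Longrightarrow> B w1 = B w2" using assms by blast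
  qed
qed

lemma card_le1: assumes "\<And>x y. x \<in> X \<Longrightarrow> y \<in> X \<Longrightarrow> x = y" shows "card X \<le> 1"
  using assms by (metis card_le_Suc0_iff_eq card.infinite le_0_eq le_SucI One_nat_def)

lemma val_from_same:
  assumes o: "\<And>u w1 w2. Dir u w1 \<Longrightarrow> Dir u w2 \<Longrightarrow> B w1 = B w2"
    and i: "\<And>u w1 w2. Dir w1 u \<Longrightarrow> Dir w2 u \<Longrightarrow> B w1 = B w2"
    and u: "u \<in> V"
  shows "card (B ` nbr u - {B u}) \<le> 2"
proof -
  have "card (B ` Out u) \<le> 1" by (rule card_le1) (unfold Out_def, use o in blast)
  moreover have "card (B ` In u) \<le> 1" by (rule card_le1) (unfold In_def, use i in blast)
  moreover have "B ` nbr u = B ` Out u \<union> B ` In u" using nbr_split by auto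
  ultimately have "card (B ` nbr u) \<le> 2" using card_Un_le[of "B ` Out u" "B ` In u"] by simp
  then show ?thesis using card_Diff1_le[of "B ` nbr u" "B u"] fin_nbr by simp
qed

lemma two_elems: assumes "card X = 2" "x \<in> X" "y \<in> X" "x \<noteq> y" "z \<in> X" shows "z = x \<or> z = y"
  using three_in[of X x y z] assms card.infinite[of X] by fastforce

lemma bad_val: assumes bad: "\<not> good" and u: "u \<in> V"
  shows "card (B ` nbr u - {B u}) \<le> 2"
proof -
  obtain v x y where v: "v \<in> V" and xy: "x \<in> insert v (nbr v)" "y \<in> insert v (nbr v)" "x \<noteq> y" "B x = B y"
    using bad unfolding good_def inj_on_def by blast
  show ?thesis
  proof (cases "x = v \<or> y = v")
    case True
    then obtain w where w: "w \<in> nbr v" "B w = B v" using xy by auto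
    have all: "B w' = B u'" if e: "E u' w'" for u' w'
    proof -
      have "{v,w} \<in> graph_edges E" "{u',w'} \<in> graph_edges E" using w e by (auto simp: graph_edges_def nbr_def)
      then obtain g where g: "g \<in> G" "g ` {v,w} = {u',w'}"
        using hat unfolding half_arc_transitive_def by blast
      have "B (g w) = B (g v)" using B_g_eq[OF g(1) _ v w(2)] w by (auto simp: nbr_def)
      moreover have "{g v, g w} = {u', w'}" using g(2) by simp
      ultimately show ?thesis by (auto simp: doubleton_eq_iff)
    qed
    have "B ` nbr u - {B u} = {}" using all by (auto simp: nbr_def)
    then show ?thesis by (metis card.empty le0)
  next
    case False
    then have xn: "x \<in> nbr v" "y \<in> nbr v" using xy by auto
    then have xo: "x \<in> Out v \<or> x \<in> In v" "y \<in> Out v \<or> y \<in> In v" using nbr_split by auto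
    have transp: "B w1 = B w2" if S: "\<And>z1 z2. z1 \<in> S v \<Longrightarrow> z2 \<in> S v \<Longrightarrow> B z1 = B z2"
      and Sg: "\<And>g a. g \<in> G \<Longrightarrow> a \<in> V \<Longrightarrow> g ` S a = S (g a)" and Ssub: "\<And>a. S a \<subseteq> V"
      and a: "a \<in> V" and w: "w1 \<in> S a" "w2 \<in> S a" for S a w1 w2
    proof -
      obtain g where g: "g \<in> G" "g v = a" using vtrans v a by blast
      obtain z1 z2 where z: "z1 \<in> S v" "z2 \<in> S v" "w1 = g z1" "w2 = g z2"
        using Sg[OF g(1) v] g(2) w by (metis imageE)
      have "B z1 = B z2" using S[OF z(1) z(2)] .
      then show ?thesis using B_g_eq[OF g(1)] z Ssub by (metis subsetD)
    qed
    have OutS: "\<And>g a. g \<in> G \<Longrightarrow> a \<in> V \<Longrightarrow> g ` Out a = Out (g a)" using Out_g by auto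
    have InS: "\<And>g a. g \<in> G \<Longrightarrow> a \<in> V \<Longrightarrow> g ` In a = In (g a)" using In_g by auto
    show ?thesis
    proof (cases "(x \<in> Out v \<and> y \<in> Out v) \<or> (x \<in> In v \<and> y \<in> In v)")
      case True
      then show ?thesis
      proof
        assume xy2: "x \<in> Out v \<and> y \<in> Out v"
        have S: "B z1 = B z2" if "z1 \<in> Out v" "z2 \<in> Out v" for z1 z2
          using two_elems[OF card_Out_In(1)[OF v], of x y] xy2 xy that by metis
        have o: "B w1 = B w2" if "Dir a w1" "Dir a w2" for a w1 w2
          using transp[of Out, OF S OutS Out_sub, of a w1 w2] that Dir_V by (auto simp: Out_def)
        have i: "B w1 = B w2" if "Dir w1 a" "Dir w2 a" for a w1 w2
        proof (rule allOut_allIn)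
          show "\<And>u w1 w2. Dir u w1 \<Longrightarrow> Dir u w2 \<Longrightarrow> B w1 = B w2" by (rule o)
        qed (use that in auto)
        show ?thesis
        proof (rule val_from_same[OF _ _ u])
          show "\<And>a w1 w2. Dir a w1 \<Longrightarrow> Dir a w2 \<Longrightarrow> B w1 = B w2" by (rule o)
          show "\<And>a w1 w2. Dir w1 a \<Longrightarrow> Dir w2 a \<Longrightarrow> B w1 = B w2" by (rule i)
        qed
      next
        assume xy2: "x \<in> In v \<and> y \<in> In v"
        have S: "B z1 = B z2" if "z1 \<in> In v" "z2 \<in> In v" for z1 z2
          using two_elems[OF card_Out_In(2)[OF v], of x y] xy2 xy that by metis
        have i: "B w1 = B w2" if "Dir w1 a" "Dir w2 a" for a w1 w2
          using transp[of In, OF S InS In_sub, of a w1 w2] that Dir_V by (auto simp: In_def)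
        have o: "B w1 = B w2" if "Dir a w1" "Dir a w2" for a w1 w2
        proof (rule allIn_allOut)
          show "\<And>u w1 w2. Dir w1 u \<Longrightarrow> Dir w2 u \<Longrightarrow> B w1 = B w2" by (rule i)
        qed (use that in auto)
        show ?thesis
        proof (rule val_from_same[OF _ _ u])
          show "\<And>a w1 w2. Dir a w1 \<Longrightarrow> Dir a w2 \<Longrightarrow> B w1 = B w2" by (rule o)
          show "\<And>a w1 w2. Dir w1 a \<Longrightarrow> Dir w2 a \<Longrightarrow> B w1 = B w2" by (rule i)
        qed
      qed
    next
      case False
      then obtain p q where pq: "p \<in> Out v" "q \<in> In v" "B p = B q"
        using xo xy(4) by metis
      have pV: "p \<in> V" "q \<in> V" using pq(1,2) Out_sub In_sub by blast+
      obtain n where n: "n \<in> N" "p = n q" using pq B_eq_iff pV B_mem by metis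
      have "Dir q v" using pq by (simp add: In_def)
      then have dz: "Dir p (n v)" using Dir_g[of n] n by simp
      have Bz: "B (n v) = B v" using B_n n v by simp
      have dvp: "Dir v p" using pq by (simp add: Out_def)
      have inOut: "B c \<in> B ` Out a" if d: "Dir c a" for c a
      proof -
        obtain g where g: "g \<in> G" "g v = c" "g p = a" using Dir_trans[OF dvp d] by blast
        have "Dir a (g (n v))" using Dir_g[OF g(1) dz] g by simp
        moreover have "B (g (n v)) = B c" using B_g_eq[OF g(1) _ v Bz] g n v gV by simp
        ultimately show ?thesis by (auto simp: Out_def)
      qed
      have "B ` nbr u \<subseteq> B ` Out u" using nbr_split inOut by (auto simp: In_def)
      then have "card (B ` nbr u) \<le> card (B ` Out u)" using fin_Out by (intro card_mono) auto
      also have "\<dots> \<le> card (Out u)" using fin_Out card_image_le by blast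
      finally have "card (B ` nbr u) \<le> 2" using card_Out_In[OF u] by simp
      then show ?thesis using card_Diff1_le[of "B ` nbr u" "B u"] fin_nbr by simp
    qed
  qed
qed

end



context hat begin

definition QA where "QA P Q \<longleftrightarrow> P \<in> Om \<and> Q \<in> Om \<and> quotient_adj E P Q"

lemma QA_E: assumes e: "E u w" shows "B u = B w \<or> QA (B u) (B w)"
proof -
  have "u \<in> V" "w \<in> V" using e E_V by auto
  then show ?thesis using e B_self Om_B unfolding QA_def quotient_adj_def by blast
qed

lemma cyc_bad: assumes bad: "\<not> good" shows "cyc Om QA"
proof
  show "finite Om" by (rule fin_Om)
  show "\<And>P Q. QA P Q \<Longrightarrow> P \<in> Om \<and> Q \<in> Om" by (simp add: QA_def)
  show "\<And>P Q. QA P Q \<Longrightarrow> QA Q P" unfolding QA_def quotient_adj_def using E_sym by blast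
  show "\<And>P Q. QA P Q \<Longrightarrow> P \<noteq> Q" unfolding QA_def quotient_adj_def by blast
  show "card {Q. QA P Q} \<le> 2" if P: "P \<in> Om" for P
  proof -
    obtain v where v: "v \<in> V" "P = B v" using P Om_B by auto
    have "{Q. QA P Q} = {C \<in> Om. quotient_adj E (B v) C}" using P v by (auto simp: QA_def)
    also have "\<dots> = B ` nbr v - {B v}" using lemQ[OF v(1)] .
    finally show ?thesis using bad_val[OF bad v(1)] by simp
  qed
  show "QA\<^sup>*\<^sup>* P Q" if P: "P \<in> Om" and Q: "Q \<in> Om" for P Q
  proof -
    obtain u where u: "u \<in> V" "P = B u" using P Om_B by auto
    obtain w where w: "w \<in> V" "Q = B w" using Q Om_B by auto
    have "E\<^sup>*\<^sup>* u w" using conn u w by auto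
    then have "QA\<^sup>*\<^sup>* (B u) (B w)"
    proof (induct rule: rtranclp_induct)
      case base then show ?case by simp
    next
      case (step y z)
      then show ?case using QA_E[OF step(2)] by (metis rtranclp.rtrancl_into_rtrancl)
    qed
    then show ?thesis using u w by simp
  qed
qed

lemma img_Om: "g \<in> G \<Longrightarrow> P \<in> Om \<Longrightarrow> g ` P \<in> Om"
  using B_g Om_B gV by metis

lemma Om_sub: "P \<in> Om \<Longrightarrow> P \<subseteq> V" using B_sub Om_B by auto

lemma img_inj: "g \<in> G \<Longrightarrow> inj_on (\<lambda>P. g ` P) Om"
proof (rule inj_onI)
  fix P Q assume g: "g \<in> G" and P: "P \<in> Om" and Q: "Q \<in> Om" and e: "g ` P = g ` Q"
  have "inj_on g V" using g_bij[OF g] by (simp add: bij_betw_def)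
  then show "P = Q" using e Om_sub[OF P] Om_sub[OF Q] by (simp add: inj_on_image_eq_iff)
qed

lemma img_inv: "g \<in> G \<Longrightarrow> P \<subseteq> V \<Longrightarrow> (inv\<^bsub>GG\<^esub> g) ` (g ` P) = P"
  using img_mul[of "inv\<^bsub>GG\<^esub> g" g P] inv_in group.l_inv[OF grpGG, of g] img_one by simp

lemma QA_fwd: assumes g: "g \<in> G" and q: "QA P Q" shows "QA (g ` P) (g ` Q)"
proof -
  have PQ: "P \<in> Om" "Q \<in> Om" "P \<noteq> Q" using q by (auto simp: QA_def quotient_adj_def)
  have "g ` P \<noteq> g ` Q" using img_inj[OF g] PQ by (auto dest: inj_onD)
  moreover obtain u w where "u \<in> P" "w \<in> Q" "E u w" using q by (auto simp: QA_def quotient_adj_def)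
  ultimately show ?thesis using img_Om g PQ autE' unfolding QA_def quotient_adj_def by blast
qed

lemma QA_iff: assumes g: "g \<in> G" and P: "P \<in> Om" and Q: "Q \<in> Om"
  shows "QA (g ` P) (g ` Q) = QA P Q"
  using QA_fwd[OF g] QA_fwd[OF inv_in[OF g], of "g ` P" "g ` Q"] img_inv g Om_sub P Q by auto

definition actT :: "('a \<Rightarrow> 'a) \<Rightarrow> 'a set \<times> 'a set \<Rightarrow> 'a set \<times> 'a set" where "actT g = map_prod (\<lambda>P. g ` P) (\<lambda>P. g ` P)"

lemma Hstab_all: assumes "\<not> good" shows "\<exists>j. (derived GG ^^ j) G \<subseteq> {g \<in> G. g a0 \<in> B a0}"
proof -
  interpret C: cyc Om QA using cyc_bad[OF assms] .
  have TOm: "t \<in> C.T \<Longrightarrow> fst t \<in> Om \<and> snd t \<in> Om" for t by (auto simp: C.T_def QA_def)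
  have Tsub: "t \<in> C.T \<Longrightarrow> fst t \<subseteq> V \<and> snd t \<subseteq> V" for t using TOm Om_sub by blast
  have aT: "actT g t \<in> C.T" and arho: "actT g (C.rho t) = C.rho (actT g t)" if g: "g \<in> G" and t: "t \<in> C.T" for g t
    using C.aut_comm[of "\<lambda>P. g ` P", OF _ img_inj[OF g] _ t] img_Om[OF g] QA_iff[OF g] unfolding actT_def
    by auto
  have amul: "actT (a \<otimes>\<^bsub>GG\<^esub> b) t = actT a (actT b t)" if "a \<in> G" "b \<in> G" "t \<in> C.T" for a b t
    using img_mul that Tsub[OF that(3)] unfolding actT_def by (cases t) auto
  have aone: "actT \<one>\<^bsub>GG\<^esub> t = t" if "t \<in> C.T" for t
    using img_one Tsub[OF that] unfolding actT_def by (cases t) auto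
  have aorb: "actT g ` C.orb t = C.orb (actT g t)" if g: "g \<in> G" and t: "t \<in> C.T" for g t
    by (rule C.comm_orb) (use aT arho g t in auto)
  define Pi where "Pi = C.orb ` C.T"
  define actP where "actP g p = actT g ` p" for g :: "'a \<Rightarrow> 'a" and p
  have Pisub: "p \<in> Pi \<Longrightarrow> p \<subseteq> C.T" for p using C.orb_sub Pi_def by auto
  have Pimul: "actP (a \<otimes>\<^bsub>GG\<^esub> b) p = actP a (actP b p)" if "a \<in> G" "b \<in> G" "p \<in> Pi" for a b p
    unfolding actP_def using amul that Pisub[OF that(3)] by (auto simp: image_image subset_iff intro!: image_cong)
  have Pione: "actP \<one>\<^bsub>GG\<^esub> p = p" if "p \<in> Pi" for p
    unfolding actP_def using aone Pisub[OF that] by (auto simp: subset_iff image_iff) (metis)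
  have Picl: "actP g p \<in> Pi" if g: "g \<in> G" and p: "p \<in> Pi" for g p
  proof -
    obtain t where t: "t \<in> C.T" "p = C.orb t" using p Pi_def by auto
    show ?thesis using aorb[OF g t(1)] aT[OF g t(1)] t unfolding actP_def Pi_def by auto
  qed
  have Piinj: "inj_on (actP g) Pi" if g: "g \<in> G" for g
  proof (rule inj_onI)
    fix p q assume p: "p \<in> Pi" and q: "q \<in> Pi" and e: "actP g p = actP g q"
    have "actP (inv\<^bsub>GG\<^esub> g) (actP g p) = actP (inv\<^bsub>GG\<^esub> g \<otimes>\<^bsub>GG\<^esub> g) p"
      using Pimul[OF inv_in[OF g] g p] by simp
    also have "\<dots> = p" using group.l_inv[OF grpGG, of g] g Pione[OF p] by simp
    finally have 1: "actP (inv\<^bsub>GG\<^esub> g) (actP g p) = p" .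
    have "actP (inv\<^bsub>GG\<^esub> g) (actP g q) = actP (inv\<^bsub>GG\<^esub> g \<otimes>\<^bsub>GG\<^esub> g) q"
      using Pimul[OF inv_in[OF g] g q] by simp
    also have "\<dots> = q" using group.l_inv[OF grpGG, of g] g Pione[OF q] by simp
    finally have 2: "actP (inv\<^bsub>GG\<^esub> g) (actP g q) = q" .
    show "p = q" using 1 2 e by metis
  qed
  define H1 where "H1 = {g \<in> carrier GG. \<forall>p\<in>Pi. actP g p = p}"
  define H2 where "H2 = {g \<in> carrier GG. \<forall>t\<in>C.T. actT g t = t}"
  have H1sub: "subgroup H1 GG" unfolding H1_def
    by (rule group.stab_subgroup[OF grpGG]) (use Pimul Pione in auto)
  have H2sub: "subgroup H2 GG" unfolding H2_def
    by (rule group.stab_subgroup[OF grpGG]) (use amul aone in auto)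
  have st1: "derived GG G \<subseteq> H1"
  proof (rule group.derived_sub_by_comm[OF grpGG H1sub])
    show "G \<subseteq> carrier GG" by simp
    fix a b assume a: "a \<in> G" and b: "b \<in> G"
    have "actP (a \<otimes>\<^bsub>GG\<^esub> b \<otimes>\<^bsub>GG\<^esub> inv\<^bsub>GG\<^esub> a \<otimes>\<^bsub>GG\<^esub> inv\<^bsub>GG\<^esub> b) p = p" if p: "p \<in> Pi" for p
    proof (rule group.comm_fix[OF grpGG, where act=actP and Y=Pi])
      show "a \<in> carrier GG" "b \<in> carrier GG" using a b by auto
      show "\<And>c d y. c \<in> carrier GG \<Longrightarrow> d \<in> carrier GG \<Longrightarrow> y \<in> Pi \<Longrightarrow> actP (c \<otimes>\<^bsub>GG\<^esub> d) y = actP c (actP d y)"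
        using Pimul by auto
      show "\<And>y. y \<in> Pi \<Longrightarrow> actP \<one>\<^bsub>GG\<^esub> y = y" using Pione by auto
      show "\<And>y. y \<in> Pi \<Longrightarrow> actP (inv\<^bsub>GG\<^esub> a) y \<in> Pi" using Picl inv_in a by auto
      show "\<And>y. y \<in> Pi \<Longrightarrow> actP (inv\<^bsub>GG\<^esub> b) y \<in> Pi" using Picl inv_in b by auto
      show "p \<in> Pi" by fact
      fix y assume y: "y \<in> Pi"
      show "actP a (actP b y) = actP b (actP a y)"
        by (rule two_commute[where Y=Pi]) (use C.fin_orbs C.card_orbs Picl Piinj a b y Pi_def in auto)
    qed
    then show "a \<otimes>\<^bsub>GG\<^esub> b \<otimes>\<^bsub>GG\<^esub> inv\<^bsub>GG\<^esub> a \<otimes>\<^bsub>GG\<^esub> inv\<^bsub>GG\<^esub> b \<in> H1"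
      unfolding H1_def using a b mul_in inv_in by auto
  qed
  have st2: "derived GG H1 \<subseteq> H2"
  proof (rule group.derived_sub_by_comm[OF grpGG H2sub])
    show "H1 \<subseteq> carrier GG" using H1_def by auto
    fix a b assume a: "a \<in> H1" and b: "b \<in> H1"
    have aG: "a \<in> G" "b \<in> G" using a b H1_def by auto
    have ao: "actT c t \<in> C.orb t" if c: "c \<in> H1" and t: "t \<in> C.T" for c t
    proof -
      have "actP c (C.orb t) = C.orb t" using c t Pi_def H1_def by auto
      then show ?thesis using C.orb_self[of t] unfolding actP_def by blast
    qed
    have "actT (a \<otimes>\<^bsub>GG\<^esub> b \<otimes>\<^bsub>GG\<^esub> inv\<^bsub>GG\<^esub> a \<otimes>\<^bsub>GG\<^esub> inv\<^bsub>GG\<^esub> b) t = t" if t: "t \<in> C.T" for t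
    proof (rule group.comm_fix[OF grpGG, where act=actT and Y="C.T"])
      show "a \<in> carrier GG" "b \<in> carrier GG" using aG by auto
      show "\<And>c d y. c \<in> carrier GG \<Longrightarrow> d \<in> carrier GG \<Longrightarrow> y \<in> C.T \<Longrightarrow> actT (c \<otimes>\<^bsub>GG\<^esub> d) y = actT c (actT d y)"
        using amul by auto
      show "\<And>y. y \<in> C.T \<Longrightarrow> actT \<one>\<^bsub>GG\<^esub> y = y" using aone by auto
      show "\<And>y. y \<in> C.T \<Longrightarrow> actT (inv\<^bsub>GG\<^esub> a) y \<in> C.T" using aT inv_in aG by auto
      show "\<And>y. y \<in> C.T \<Longrightarrow> actT (inv\<^bsub>GG\<^esub> b) y \<in> C.T" using aT inv_in aG by auto
      show "t \<in> C.T" by fact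
      fix y assume y: "y \<in> C.T"
      show "actT a (actT b y) = actT b (actT a y)"
        by (rule C.comm_two) (use aT arho aG ao a b y in auto)
    qed
    then show "a \<otimes>\<^bsub>GG\<^esub> b \<otimes>\<^bsub>GG\<^esub> inv\<^bsub>GG\<^esub> a \<otimes>\<^bsub>GG\<^esub> inv\<^bsub>GG\<^esub> b \<in> H2"
      unfolding H2_def using aG mul_in inv_in by auto
  qed
  have st3: "H2 \<subseteq> {g \<in> G. g a0 \<in> B a0}"
  proof (cases "\<exists>Q. QA (B a0) Q")
    case True
    then obtain Q where Q: "QA (B a0) Q" by auto
    then have t: "(B a0, Q) \<in> C.T" by (simp add: C.T_def)
    show ?thesis
    proof
      fix g assume g: "g \<in> H2"
      then have "actT g (B a0, Q) = (B a0, Q)" "g \<in> G" using t H2_def by auto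
      then have "g ` B a0 = B a0" "g \<in> G" by (auto simp: actT_def)
      then show "g \<in> {g \<in> G. g a0 \<in> B a0}" using B_self a0V by blast
    qed
  next
    case False
    have one: "P = B a0" if P: "P \<in> Om" for P
    proof -
      have "QA\<^sup>*\<^sup>* (B a0) P" using C.conn Om_B a0V P by blast
      then show ?thesis using False by (cases rule: converse_rtranclpE) auto
    qed
    show ?thesis
    proof
      fix g assume g: "g \<in> H2"
      then have gG: "g \<in> G" using H2_def by auto
      have "g ` B a0 \<in> Om" using img_Om[OF gG] Om_B a0V by auto
      then have "g ` B a0 = B a0" using one by blast
      then show "g \<in> {g \<in> G. g a0 \<in> B a0}" using B_self a0V gG by blast
    qed
  qed
  have "(derived GG ^^ 2) G = derived GG (derived GG G)" by (simp add: numeral_2_eq_2)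
  also have "\<dots> \<subseteq> derived GG H1" using group.mono_derived[OF grpGG st1] .
  also have "\<dots> \<subseteq> {g \<in> G. g a0 \<in> B a0}" using st2 st3 by auto
  finally show ?thesis by blast
qed

end



context hat begin

lemma pi_part:
  assumes k: "(derived GG ^^ k) (Fix {a0}) \<subseteq> {\<one>\<^bsub>GG\<^esub>}"
  shows "(derived GG ^^ k) {g \<in> G. g a0 \<in> B a0} \<subseteq> N"
proof -
  interpret NN: normal N GG using nor .
  have grpM: "group (GG Mod N)" using NN.factorgroup_is_group .
  define pi where "pi = (\<lambda>a. N #>\<^bsub>GG\<^esub> a)"
  have hom: "group_hom GG (GG Mod N) pi"
    unfolding group_hom_def group_hom_axioms_def using grpGG grpM NN.r_coset_hom_Mod pi_def by auto
  define Hs where "Hs = {g \<in> G. g a0 \<in> B a0}"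
  have Hs_c: "Hs \<subseteq> carrier GG" using Hs_def by auto
  have Fix_c: "Fix {a0} \<subseteq> carrier GG" using Fix_G by simp
  have img: "pi ` Hs \<subseteq> pi ` Fix {a0}"
  proof
    fix y assume "y \<in> pi ` Hs"
    then obtain x where x: "x \<in> G" "x a0 \<in> B a0" "y = pi x" using Hs_def by auto
    obtain n where n: "n \<in> N" "x a0 = n a0" using x B_mem by auto
    define l where "l = inv\<^bsub>GG\<^esub> n \<otimes>\<^bsub>GG\<^esub> x"
    have lG: "l \<in> G" using l_def x n inv_in mul_in by simp
    have "l a0 = (inv\<^bsub>GG\<^esub> n) (x a0)" using l_def app_mul[OF inv_in x(1)] n a0V by simp
    also have "\<dots> = a0" using n inv_app1[of n a0] a0V by simp
    finally have "l \<in> Fix {a0}" using lG by (simp add: Fix_def)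
    moreover have "pi l = pi x"
    proof -
      have "pi l = pi (inv\<^bsub>GG\<^esub> n) \<otimes>\<^bsub>GG Mod N\<^esub> pi x"
        using group_hom.hom_mult[OF hom, of "inv\<^bsub>GG\<^esub> n" x] l_def n x inv_in by simp
      moreover have "pi (inv\<^bsub>GG\<^esub> n) = \<one>\<^bsub>GG Mod N\<^esub>"
        using subgroup.rcos_const[OF N_sub grpGG N_inv[OF n(1)]] pi_def by simp
      moreover have "pi x \<in> carrier (GG Mod N)" using group_hom.hom_closed[OF hom] x by simp
      ultimately show ?thesis using monoid.l_one[OF group.is_monoid[OF grpM]] by simp
    qed
    ultimately show "y \<in> pi ` Fix {a0}" using x by blast
  qed
  have "pi ` ((derived GG ^^ k) Hs) = (derived (GG Mod N) ^^ k) (pi ` Hs)"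
    using group_hom.exp_of_derived_img[OF hom Hs_c] by simp
  also have "\<dots> \<subseteq> (derived (GG Mod N) ^^ k) (pi ` Fix {a0})"
    using group.mono_exp_of_derived[OF grpM img] .
  also have "\<dots> = pi ` ((derived GG ^^ k) (Fix {a0}))"
    using group_hom.exp_of_derived_img[OF hom Fix_c] by simp
  also have "\<dots> \<subseteq> pi ` {\<one>\<^bsub>GG\<^esub>}" using k by auto
  also have "\<dots> = {N}" using pi_def NN.subset group.coset_mult_one[OF grpGG] by simp
  finally have pim: "pi ` ((derived GG ^^ k) Hs) \<subseteq> {N}" .
  show ?thesis unfolding Hs_def[symmetric]
  proof
    fix x assume x: "x \<in> (derived GG ^^ k) Hs"
    have xc: "x \<in> carrier GG" using group.exp_of_derived_in_carrier[OF grpGG Hs_c] x by blast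
    have "N #>\<^bsub>GG\<^esub> x = N" using pim x pi_def by auto
    then show "x \<in> N" using group.rcos_self[OF grpGG xc N_sub] by simp
  qed
qed

lemma N_solv:
  assumes s: "solvable (perm_grp V N)"
  shows "\<exists>m. (derived GG ^^ m) N \<subseteq> {\<one>\<^bsub>GG\<^esub>}"
proof -
  have grpN: "group (GG\<lparr>carrier := N\<rparr>)" using group.subgroup_imp_group[OF grpGG N_sub] .
  have sN: "solvable (GG\<lparr>carrier := N\<rparr>)" using s by simp
  obtain m where m: "(derived (GG\<lparr>carrier := N\<rparr>) ^^ m) (carrier (GG\<lparr>carrier := N\<rparr>)) = {\<one>\<^bsub>GG\<lparr>carrier := N\<rparr>\<^esub>}"
    using group.solvable_iff_trivial_derived_seq[OF grpN] sN by blast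
  have cons: "(derived (GG\<lparr>carrier := N\<rparr>) ^^ i) N = (derived GG ^^ i) N \<and> (derived GG ^^ i) N \<subseteq> N" for i
  proof (induct i)
    case 0 then show ?case by simp
  next
    case (Suc i)
    have "derived (GG\<lparr>carrier := N\<rparr>) ((derived GG ^^ i) N) = derived GG ((derived GG ^^ i) N)"
      using group.derived_consistent[OF grpGG _ N_sub] Suc by blast
    moreover have "derived GG ((derived GG ^^ i) N) \<subseteq> N"
      using group.derived_incl[OF grpGG _ N_sub] Suc by blast
    ultimately show ?case using Suc by simp
  qed
  have "(derived GG ^^ m) N = {\<one>\<^bsub>GG\<^esub>}" using m cons[of m] by simp
  then show ?thesis by blast
qed

lemma main:
  assumes sN: "solvable (perm_grp V N)" and nsG: "\<not> solvable (perm_grp V G)"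
  shows "normal_cover_tetra V E N \<and> semiregular V N"
proof (cases good)
  case True then show ?thesis using good_cover good_semireg by simp
next
  case False
  obtain j where j: "(derived GG ^^ j) G \<subseteq> {g \<in> G. g a0 \<in> B a0}" using Hstab_all[OF False] by blast
  obtain k where k: "(derived GG ^^ k) (Fix {a0}) \<subseteq> {\<one>\<^bsub>GG\<^esub>}" using stab_solv by blast
  obtain m where m: "(derived GG ^^ m) N \<subseteq> {\<one>\<^bsub>GG\<^esub>}" using N_solv[OF sN] by blast
  have "(derived GG ^^ (m + (k + j))) G = (derived GG ^^ m) ((derived GG ^^ k) ((derived GG ^^ j) G))"
    by (simp add: funpow_add)
  also have "\<dots> \<subseteq> (derived GG ^^ m) ((derived GG ^^ k) {g \<in> G. g a0 \<in> B a0})"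
    using group.mono_exp_of_derived[OF grpGG group.mono_exp_of_derived[OF grpGG j]] .
  also have "\<dots> \<subseteq> (derived GG ^^ m) N"
    using group.mono_exp_of_derived[OF grpGG pi_part[OF k]] .
  also have "\<dots> \<subseteq> {\<one>\<^bsub>GG\<^esub>}" using m .
  finally have sub: "(derived GG ^^ (m + (k + j))) (carrier GG) \<subseteq> {\<one>\<^bsub>GG\<^esub>}" by simp
  have "\<one>\<^bsub>GG\<^esub> \<in> (derived GG ^^ (m + (k + j))) (carrier GG)"
    using subgroup.one_closed[OF group.exp_of_derived_is_subgroup[OF grpGG group.subgroup_self[OF grpGG]]] by blast
  then have "(derived GG ^^ (m + (k + j))) (carrier GG) = {\<one>\<^bsub>GG\<^esub>}" using sub by blast
  then have "solvable GG" using group.solvable_iff_trivial_derived_seq[OF grpGG] by blast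
  then show ?thesis using nsG by simp
qed

end

theorem lemma3p1:
  fixes V :: "'a set" and E :: "'a \<Rightarrow> 'a \<Rightarrow> bool"
    and G N :: "('a \<Rightarrow> 'a) set"
  assumes "simple_graph V E"
    and "graph_connected V E"
    and "tetravalent V E"
    and "subgroup G (BijGroup V)"
    and "G \<subseteq> graph_aut V E"
    and "half_arc_transitive V E G"
    and "N \<lhd> perm_grp V G"
    and "solvable (perm_grp V N)"
    and "\<not> solvable (perm_grp V G)"
  shows "normal_cover_tetra V E N \<and> semiregular V N"
proof -
  have h: "hat V E G N" unfolding hat_def using assms by blast
  interpret hat V E G N by (rule h)
  show ?thesis using main assms(8,9) by blast
qed



end
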